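(* Let $n\ge2$, $1\le p\le n-1$, and let $\pi\in S_n$ be a $p$-resultant permutation such that $\pi^{\text{left}}$ has $i$ left-to-right maxima and $\pi^{\text{right}}$ has $j$ right-to-left minima. Then the number of configurations in $\mathcal{S}(n-1,p)$ that topple to $\pi$ is $\tfrac12 B_{i,j}$.
   Context: For $m\ge1$, $1\le p\le m$: sites are $0,\dots,m+1$; a configuration in $\mathcal{S}(m,p)$ places $m+1$ distinct chips labeled $1,\dots,m+1$ with sites $0,m+1$ empty, one chip at each site of $\{1,\dots,m\}\setminus\{p\}$ and two chips at site $p$. Toppling: while some site holds at least two chips, choose such a site $i$ and two chips $\alpha<\beta$ there and move $\alpha$ to $i-1$, $\beta$ to $i+1$. It is known this terminates with at most one chip per site and the final configuration is independent of the choices; reading labels left to right gives a permutation in $S_{m+1}$ to which the configuration topples. $\pi\in S_n$ is $p$-resultant if some configuration in $\mathcal{S}(n-1,p)$ topples to it; then $\pi^{\text{left}}=(\pi_1,\dots,\pi_{n-p})$ is a permutation of $[n-p]$ and $\pi^{\text{right}}=(\pi_{n-p+1},\dots,\pi_n)$ a permutation of $\{n-p+1,\dots,n\}$. Left-to-right maximum of $a_1\cdots a_k$: an entry $a_j=\max\{a_1,\dots,a_j\}$; right-to-left minimum: an entry $a_j=\min\{a_j,\dots,a_k\}$. Poly-Bernoulli numbers of type B: $\sum_{n\ge0}B_{n,k}\frac{x^n}{n!}=\frac{\mathrm{Li}_{-k}(1-e^{-x})}{1-e^{-x}}$ with $\mathrm{Li}_s(z)=\sum_{i\ge1}z^i/i^s$;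 equivalently $B_{n,k}=\sum_{m=0}^{\min(n,k)}(m!)^2\left\{{n+1\atop m+1}\right\}\left\{{k+1\atop m+1}\right\}$. *)

theory Defs
  imports Complex_Main "HOL-Combinatorics.Stirling" "HOL-Library.Multiset"
begin

text \<open>A labeled chip configuration with chips 1..m+1 is a list xs of length m+1 of
  integer sites: chip a sits at site xs ! (a - 1).\<close>

definition config_S :: "nat \<Rightarrow> nat \<Rightarrow> int list set" where
  "config_S m p = {xs. length xs = m + 1 \<and>
     (\<forall>s::int. card {a. a < m + 1 \<and> xs ! a = s} =
        (if s = int p then 2 else if 1 \<le> s \<and> s \<le> int m then 1 else 0))}"

definition topple_step :: "int list \<Rightarrow> int list \<Rightarrow> bool" where
  "topple_step xs ys \<longleftrightarrow> (\<exists>\<alpha> \<beta>. \<alpha> < \<beta> \<and> \<beta> < length xs \<and> xs ! \<alpha> = xs ! \<beta> \<and>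
      ys = xs[\<alpha> := xs ! \<alpha> - 1, \<beta> := xs ! \<beta> + 1])"

definition stable_config :: "int list \<Rightarrow> bool" where
  "stable_config xs \<longleftrightarrow> distinct xs"

definition read_perm :: "int list \<Rightarrow> nat list" where
  "read_perm xs = sort_key (\<lambda>a. xs ! (a - 1)) [1..<length xs + 1]"

definition topples_to :: "int list \<Rightarrow> nat list \<Rightarrow> bool" where
  "topples_to xs \<pi> \<longleftrightarrow> (\<exists>ys. topple_step\<^sup>*\<^sup>* xs ys \<and> stable_config ys \<and> read_perm ys = \<pi>)"

definition is_perm :: "nat \<Rightarrow> nat list \<Rightarrow> bool" where
  "is_perm n \<pi> \<longleftrightarrow> mset \<pi> = mset [1..<n + 1]"

definition p_resultant :: "nat \<Rightarrow> nat \<Rightarrow> nat list \<Rightarrow> bool" where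
  "p_resultant n p \<pi> \<longleftrightarrow> (\<exists>xs \<in> config_S (n - 1) p. topples_to xs \<pi>)"

definition ltr_maxima :: "nat list \<Rightarrow> nat" where
  "ltr_maxima xs = card {k. k < length xs \<and> xs ! k = Max (set (take (k + 1) xs))}"

definition rtl_minima :: "nat list \<Rightarrow> nat" where
  "rtl_minima xs = card {k. k < length xs \<and> xs ! k = Min (set (drop k xs))}"

definition poly_bernoulli_B :: "nat \<Rightarrow> nat \<Rightarrow> nat" where
  "poly_bernoulli_B n k = (\<Sum>m = 0..min n k.
      (fact m)^2 * Stirling (n + 1) (m + 1) * Stirling (k + 1) (m + 1))"

end

theory Submission
  imports Defs
begin

definition Esum :: "nat \<Rightarrow> nat \<Rightarrow> nat" where
  "Esum i m = (\<Sum>k<i. (i choose k) * Stirling (k+2) m)"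

lemma Esum_0 [simp]: "Esum i 0 = 0"
  by (simp add: Esum_def)

lemma Esum_Suc_i: "Esum (Suc i) (Suc m) = (m+2) * Esum i (Suc m) + Stirling (i+2) (Suc m) + Esum i m"
proof -
  let ?g = "\<lambda>k. Stirling (k+2) (Suc m)"
  have "Esum (Suc i) (Suc m) = ?g 0 + (\<Sum>k<i. (Suc i choose Suc k) * ?g (Suc k))"
    unfolding Esum_def by (subst sum.lessThan_Suc_shift) simp
  also have "\<dots> = ?g 0 + (\<Sum>k<i. (i choose Suc k) * ?g (Suc k)) + (\<Sum>k<i. (i choose k) * ?g (Suc k))"
    by (simp add: sum.distrib algebra_simps)
  also have "?g 0 + (\<Sum>k<i. (i choose Suc k) * ?g (Suc k)) = (\<Sum>k<Suc i. (i choose k) * ?g k)"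
    by (subst sum.lessThan_Suc_shift) simp
  also have "\<dots> = Esum i (Suc m) + ?g i"
    unfolding Esum_def by simp
  also have "(\<Sum>k<i. (i choose k) * ?g (Suc k)) = (Suc m) * Esum i (Suc m) + Esum i m"
    unfolding Esum_def by (simp add: sum.distrib sum_distrib_left algebra_simps numeral_eq_Suc)
  finally show ?thesis by simp
qed

lemma Esum_formula: "Esum i (Suc m) = m * Stirling (i+1) (m+1) + (m+1)^2 * Stirling (i+1) (m+2)"
proof (induction i arbitrary: m)
  case 0
  then show ?case by (cases m) (simp_all add: Esum_def)
next
  case (Suc i)
  show ?case
  proof (cases m)
    case 0
    then show ?thesis using Suc[of 0] Esum_Suc_i[of i 0]
      by (simp add: numeral_eq_Suc)
  next
    case (Suc m')
    show ?thesis using Suc Esum_Suc_i[of i m] \<open>\<And>m. Esum i (Suc m) = _\<close>[of m] \<open>\<And>m. Esum i (Suc m) = _\<close>[of m']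
      by (simp add: numeral_eq_Suc power2_eq_square algebra_simps)
  qed
qed


definition sa :: "nat \<Rightarrow> nat \<Rightarrow> nat" where
  "sa i m = fact m * Stirling (Suc i) (Suc m)"

fun cc :: "nat \<Rightarrow> nat \<Rightarrow> nat" where
  "cc i 0 = 1"
| "cc i (Suc j) = cc i j + (\<Sum>k<i. (i choose k) * cc (Suc k) j)"

lemma sa_star: "m * sa i m + (m+1) * sa i (m+1) = (\<Sum>k<i. (i choose k) * sa (Suc k) m)"
proof -
  have "(\<Sum>k<i. (i choose k) * sa (Suc k) m) = fact m * Esum i (Suc m)"
    by (simp add: sa_def Esum_def sum_distrib_left algebra_simps numeral_eq_Suc)
  also have "\<dots> = fact m * (m * Stirling (i+1) (m+1) + (m+1)^2 * Stirling (i+1) (m+2))"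
    by (simp add: Esum_formula)
  also have "\<dots> = m * sa i m + (m+1) * sa i (m+1)"
    by (simp add: sa_def power2_eq_square algebra_simps numeral_eq_Suc)
  finally show ?thesis by simp
qed

lemma sa_Suc: "sa (Suc j) m = Suc m * sa j m + (if m = 0 then 0 else m * sa j (m - 1))"
  by (cases m) (simp_all add: sa_def algebra_simps)

lemma sa_zero: "i < m \<Longrightarrow> sa i m = 0"
  by (simp add: sa_def)

lemma sa_0 [simp]: "sa 0 m = (if m = 0 then 1 else 0)"
  by (cases m) (simp_all add: sa_def)

lemma cc_sum: "i < K \<Longrightarrow> cc i j = (\<Sum>m<K. sa i m * sa j m)"
proof (induction j arbitrary: i)
  case 0
  have "(\<Sum>m<K. sa i m * sa 0 m) = sa i 0"
    using 0 by (simp add: sum.delta' if_distrib cong: if_cong)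
  moreover have "sa i 0 = 1" unfolding sa_def using Stirling_1[of i] by simp
  ultimately show ?case by simp
next
  case (Suc j)
  obtain K' where K: "K = Suc K'" using Suc.prems by (cases K) auto
  have "(\<Sum>m<K. sa i m * sa (Suc j) m)
      = (\<Sum>m<K. sa i m * Suc m * sa j m) + (\<Sum>m<K. sa i m * (if m = 0 then 0 else m * sa j (m - 1)))"
    by (simp add: sa_Suc sum.distrib algebra_simps)
  also have "(\<Sum>m<K. sa i m * (if m = 0 then 0 else m * sa j (m - 1))) = (\<Sum>m<K'. sa i (Suc m) * Suc m * sa j m)"
    unfolding K by (subst sum.lessThan_Suc_shift) (simp add: algebra_simps)
  also have "\<dots> = (\<Sum>m<K. sa i (Suc m) * Suc m * sa j m)"
    unfolding K using Suc.prems K by (simp add: sa_zero)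
  finally have 1: "(\<Sum>m<K. sa i m * sa (Suc j) m) = (\<Sum>m<K. sa j m * sa i m) + (\<Sum>m<K. sa j m * (m * sa i m + (m+1) * sa i (m+1)))"
    by (simp add: sum.distrib[symmetric] algebra_simps)
  have 2: "(\<Sum>m<K. sa j m * (m * sa i m + (m+1) * sa i (m+1))) = (\<Sum>k<i. (i choose k) * cc (Suc k) j)"
  proof -
    have "(\<Sum>m<K. sa j m * (m * sa i m + (m+1) * sa i (m+1))) = (\<Sum>m<K. \<Sum>k<i. (i choose k) * (sa (Suc k) m * sa j m))"
      by (intro sum.cong refl, simp only: sa_star sum_distrib_left) (simp add: mult_ac)
    also have "\<dots> = (\<Sum>k<i. (i choose k) * (\<Sum>m<K. sa (Suc k) m * sa j m))"
      by (subst sum.swap) (simp add: sum_distrib_left)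
    also have "\<dots> = (\<Sum>k<i. (i choose k) * cc (Suc k) j)"
      using Suc.prems by (intro sum.cong refl) (simp add: Suc.IH)
    finally show ?thesis .
  qed
  show ?case using 1 2 Suc.IH[OF Suc.prems] by (simp add: algebra_simps)
qed

lemma cc_eq_B: "cc i j = poly_bernoulli_B i j"
proof -
  have "cc i j = (\<Sum>m<Suc i. sa i m * sa j m)" by (rule cc_sum) simp
  also have "\<dots> = (\<Sum>m = 0..min i j. sa i m * sa j m)"
  proof (rule sum.mono_neutral_right)
    show "\<forall>m\<in>{..<Suc i} - {0..min i j}. sa i m * sa j m = 0"
      by (auto simp: sa_zero)
  qed auto
  also have "\<dots> = poly_bernoulli_B i j"
    unfolding poly_bernoulli_B_def sa_def by (simp add: power2_eq_square algebra_simps)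
  finally show ?thesis .
qed



fun pass :: "nat \<Rightarrow> nat list \<Rightarrow> nat list \<times> nat" where
  "pass c [] = ([], c)"
| "pass c (r#rs) = (min c r # fst (pass (max c r) rs), snd (pass (max c r) rs))"

fun grid :: "nat list \<Rightarrow> nat list \<Rightarrow> nat list \<times> nat list" where
  "grid [] rs = (rs, [])"
| "grid (v#ls) rs = (fst (pass v (fst (grid ls rs))), snd (pass v (fst (grid ls rs))) # snd (grid ls rs))"

definition gridw :: "nat \<Rightarrow> nat list \<Rightarrow> nat list \<times> nat list" where
  "gridw q w = grid (take q w) (drop q w)"

definition pre :: "nat list \<Rightarrow> nat \<Rightarrow> (nat \<times> nat list) set" where
  "pre L x = {(v,os). pass v os = (L,x)}"

lemma pass_length [simp]: "length (fst (pass v os)) = length os"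
  by (induction os arbitrary: v) auto

lemma pass_mset: "add_mset (snd (pass v os)) (mset (fst (pass v os))) = add_mset v (mset os)"
proof (induction os arbitrary: v)
  case Nil then show ?case by simp
next
  case (Cons r rs)
  have "add_mset (snd (pass (max v r) rs)) (mset (fst (pass (max v r) rs))) = add_mset (max v r) (mset rs)"
    by (rule Cons.IH)
  then show ?case by (auto simp: max_def min_def add_mset_commute)
qed

lemma pass_M_ge: "v \<le> snd (pass v os)"
  by (induction os arbitrary: v) (auto intro: order_trans[OF max.cobounded1])

lemma pass_le_M: "a \<in> set (fst (pass v os)) \<Longrightarrow> a \<le> snd (pass v os)"
proof (induction os arbitrary: v)
  case Nil then show ?case by simp
next
  case (Cons r rs)
  then show ?case using pass_M_ge[of "max v r" rs] by (auto simp: min_def max_def split: if_splits)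
qed

lemma pass_dom: "a \<in> set (fst (pass v os)) \<Longrightarrow> \<exists>b\<in>set os. a \<le> b"
proof (induction os arbitrary: v)
  case Nil then show ?case by simp
next
  case (Cons r rs)
  then show ?case by (auto simp: min_def)
qed

lemma pass_big: "(\<forall>a\<in>set os. a \<le> v) \<Longrightarrow> pass v os = (os, v)"
  by (induction os arbitrary: v) (auto simp: max_def min_def)

lemma pass_snoc: "pass v (os@[z]) = (fst (pass v os) @ [min (snd (pass v os)) z], max (snd (pass v os)) z)"
  by (induction os arbitrary: v) auto

lemma ltr_maxima_snoc:
  "ltr_maxima (xs@[y]) = ltr_maxima xs + (if \<forall>a\<in>set xs. a \<le> y then 1 else 0)"
proof -
  let ?P = "\<lambda>ys k. ys ! k = Max (set (take (k + 1) ys))"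
  have "{k. k < length (xs@[y]) \<and> ?P (xs@[y]) k} = {k. k < length xs \<and> ?P xs k} \<union> (if \<forall>a\<in>set xs. a \<le> y then {length xs} else {})"
  proof -
    have A: "k < length xs \<Longrightarrow> ?P (xs@[y]) k = ?P xs k" for k
      by (simp add: nth_append)
    have B: "?P (xs@[y]) (length xs) = (\<forall>a\<in>set xs. a \<le> y)"
    proof -
      have "?P (xs@[y]) (length xs) = (y = Max (insert y (set xs)))" by simp
      also have "\<dots> = (\<forall>a\<in>set xs. a \<le> y)"
      proof
        assume "y = Max (insert y (set xs))"
        then show "\<forall>a\<in>set xs. a \<le> y" by (metis List.finite_set Max_ge finite_insert insert_iff)
      next
        assume "\<forall>a\<in>set xs. a \<le> y"
        then show "y = Max (insert y (set xs))" by (intro Max_eqI[symmetric]) auto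
      qed
      finally show ?thesis .
    qed
    show ?thesis
      using A B by (auto simp: less_Suc_eq)
  qed
  then show ?thesis
    unfolding ltr_maxima_def by (auto simp: card_insert_if)
qed

lemma rtl_minima_Cons:
  "rtl_minima (x#R) = rtl_minima R + (if \<forall>a\<in>set R. x \<le> a then 1 else 0)"
proof -
  let ?P = "\<lambda>ys k. ys ! k = Min (set (drop k ys))"
  have "{k. k < length (x#R) \<and> ?P (x#R) k} = Suc ` {k. k < length R \<and> ?P R k} \<union> (if \<forall>a\<in>set R. x \<le> a then {0} else {})"
  proof -
    have A: "?P (x#R) (Suc k) = ?P R k" for k by simp
    have B: "?P (x#R) 0 = (\<forall>a\<in>set R. x \<le> a)"
    proof -
      have "?P (x#R) 0 = (x = Min (insert x (set R)))" by simp
      also have "\<dots> = (\<forall>a\<in>set R. x \<le> a)"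
      proof
        assume "x = Min (insert x (set R))"
        then show "\<forall>a\<in>set R. x \<le> a" by (metis List.finite_set Min_le finite_insert insert_iff)
      next
        assume "\<forall>a\<in>set R. x \<le> a"
        then show "x = Min (insert x (set R))" by (intro Min_eqI[symmetric]) auto
      qed
      finally show ?thesis .
    qed
    show ?thesis
      using A B by (auto simp: image_iff less_Suc_eq_0_disj)
  qed
  then show ?thesis
    unfolding rtl_minima_def by (auto simp: card_insert_if card_image)
qed


lemma pass_M_max: "b \<in> set os \<Longrightarrow> b \<le> snd (pass v os)"
proof (induction os arbitrary: v)
  case Nil then show ?case by simp
next
  case (Cons r rs)
  then show ?case using pass_M_ge[of "max v r" rs] by auto
qed

lemma pre_finite: "finite (pre L x)"
proof -
  have "pre L x \<subseteq> set (x#L) \<times> {os. set os \<subseteq> set (x#L) \<and> length os = length L}"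
  proof
    fix p assume "p \<in> pre L x"
    then obtain v os where p: "p = (v,os)" and P: "pass v os = (L,x)" unfolding pre_def by auto
    have M: "add_mset x (mset L) = add_mset v (mset os)" using pass_mset[of v os] P by simp
    have "v \<in># add_mset x (mset L)" using M by simp
    moreover have "set os \<subseteq> set (x#L)"
    proof
      fix b assume "b \<in> set os"
      then have "b \<in># add_mset x (mset L)" using M by simp
      then show "b \<in> set (x#L)" by simp
    qed
    moreover have "length os = length L" using pass_length[of v os] P by simp
    ultimately show "p \<in> set (x#L) \<times> {os. set os \<subseteq> set (x#L) \<and> length os = length L}"
      using p by simp
  qed
  moreover have "finite (set (x#L) \<times> {os. set os \<subseteq> set (x#L) \<and> length os = length L})"
    by (intro finite_cartesian_product finite_lists_length_eq) auto
  ultimately show ?thesis by (rule finite_subset)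
qed

lemma pre_cases:
  assumes "p \<in> pre L x"
  shows "p = (x, L) \<or> (fst p \<noteq> x \<and> x \<in> set (snd p))"
proof -
  obtain v os where p: "p = (v,os)" and P: "pass v os = (L,x)" using assms unfolding pre_def by auto
  have M: "add_mset x (mset L) = add_mset v (mset os)" using pass_mset[of v os] P by simp
  show ?thesis
  proof (cases "v = x")
    case True
    have "\<forall>b\<in>set os. b \<le> v" using pass_M_max[of _ os v] P True by auto
    then have "pass v os = (os, v)" by (rule pass_big)
    then show ?thesis using P p True by simp
  next
    case False
    then have "x \<in># mset os" using M by (metis insert_noteq_member)
    then show ?thesis using p False by simp
  qed
qed

lemma pre_self: "(\<forall>a\<in>set L. a \<le> x) \<Longrightarrow> (x, L) \<in> pre L x"
  unfolding pre_def using pass_big[of L x] by simp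

lemma pre_empty: "\<not> (\<forall>a\<in>set L. a \<le> y) \<Longrightarrow> pre L y = {}"
proof -
  assume H: "\<not> (\<forall>a\<in>set L. a \<le> y)"
  have False if "pass v os = (L, y)" for v os
    using H pass_le_M[of _ v os] that by auto
  then show ?thesis unfolding pre_def by auto
qed

lemma pre_Nil: "pre [] x = {(x, [])}"
proof -
  have "pass a b = ([],x) \<longleftrightarrow> b = [] \<and> a = x" for a b by (cases b) auto
  then show ?thesis unfolding pre_def by auto
qed

lemma pre_snoc:
  assumes "y < x"
  shows "pre (L@[y]) x = (\<lambda>p. (fst p, snd p @ [x])) ` pre L y \<union> (\<lambda>p. (fst p, snd p @ [y])) ` pre L x"
proof (intro equalityI subsetI)
  fix p assume "p \<in> pre (L@[y]) x"
  then obtain v os' where p: "p = (v, os')" and P: "pass v os' = (L@[y], x)" unfolding pre_def by auto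
  have "length os' = Suc (length L)" using pass_length[of v os'] P by simp
  then obtain os z where os': "os' = os @ [z]" by (metis length_Suc_conv_rev)
  have 1: "fst (pass v os) = L" and 2: "min (snd (pass v os)) z = y" and 3: "max (snd (pass v os)) z = x"
    using P unfolding os' pass_snoc by auto
  show "p \<in> (\<lambda>p. (fst p, snd p @ [x])) ` pre L y \<union> (\<lambda>p. (fst p, snd p @ [y])) ` pre L x"
  proof (cases "snd (pass v os) \<le> z")
    case True
    then have "(v, os) \<in> pre L y" "z = x" using 1 2 3 unfolding pre_def by (auto simp: prod_eq_iff)
    then show ?thesis using p os' by (intro UnI1 rev_image_eqI[of "(v,os)"]) auto
  next
    case False
    then have "(v, os) \<in> pre L x" "z = y" using 1 2 3 unfolding pre_def by (auto simp: prod_eq_iff)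
    then show ?thesis using p os' by (intro UnI2 rev_image_eqI[of "(v,os)"]) auto
  qed
next
  fix p assume "p \<in> (\<lambda>p. (fst p, snd p @ [x])) ` pre L y \<union> (\<lambda>p. (fst p, snd p @ [y])) ` pre L x"
  then show "p \<in> pre (L@[y]) x"
    using assms unfolding pre_def by (auto simp: pass_snoc min_def max_def)
qed

lemma binom_shift:
  "(\<Sum>k<Suc i. (Suc i choose k) * (G k :: nat)) = (\<Sum>k<i. (i choose k) * G (Suc k)) + (\<Sum>k<i. (i choose k) * G k) + G i"
proof -
  have "(\<Sum>k<Suc i. (Suc i choose k) * G k) = G 0 + (\<Sum>k<i. (Suc i choose Suc k) * G (Suc k))"
    by (subst sum.lessThan_Suc_shift) simp
  also have "\<dots> = G 0 + (\<Sum>k<i. (i choose Suc k) * G (Suc k)) + (\<Sum>k<i. (i choose k) * G (Suc k))"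
    by (simp add: sum.distrib algebra_simps)
  also have "G 0 + (\<Sum>k<i. (i choose Suc k) * G (Suc k)) = (\<Sum>k<Suc i. (i choose k) * G k)"
    by (subst sum.lessThan_Suc_shift) simp
  also have "\<dots> = (\<Sum>k<i. (i choose k) * G k) + G i" by simp
  finally show ?thesis by simp
qed

lemma pre_sum:
  assumes "distinct L" "\<forall>a\<in>set L. a < x"
  shows "(\<Sum>p\<in>pre L x. F (ltr_maxima (snd p))) =
    F (ltr_maxima L) + (\<Sum>k<ltr_maxima L. (ltr_maxima L choose k) * F (Suc k))"
  using assms
proof (induction L arbitrary: x F rule: rev_induct)
  case Nil
  then show ?case by (simp add: pre_Nil ltr_maxima_def)
next
  case (snoc y L)
  let ?i = "ltr_maxima L"
  have yx: "y < x" using snoc.prems by simp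
  have dL: "distinct L" and Lx: "\<forall>a\<in>set L. a < x" using snoc.prems by auto
  let ?A = "(\<lambda>p. (fst p, snd p @ [x])) ` pre L y"
  let ?B = "(\<lambda>p. (fst p, snd p @ [y])) ` pre L x"
  have disj: "?A \<inter> ?B = {}" using yx by auto
  have injA: "inj_on (\<lambda>p. (fst p, snd p @ [x])) (pre L y)" by (auto simp: inj_on_def prod_eq_iff)
  have injB: "inj_on (\<lambda>p. (fst p, snd p @ [y])) (pre L x)" by (auto simp: inj_on_def prod_eq_iff)
  have "(\<Sum>p\<in>pre (L@[y]) x. F (ltr_maxima (snd p))) = (\<Sum>p\<in>?A. F (ltr_maxima (snd p))) + (\<Sum>p\<in>?B. F (ltr_maxima (snd p)))"
    unfolding pre_snoc[OF yx] by (rule sum.union_disjoint) (auto simp: pre_finite disj)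
  also have "(\<Sum>p\<in>?A. F (ltr_maxima (snd p))) = (\<Sum>p\<in>pre L y. F (ltr_maxima (snd p @ [x])))"
    by (subst sum.reindex[OF injA]) simp
  also have "(\<Sum>p\<in>?B. F (ltr_maxima (snd p))) = (\<Sum>p\<in>pre L x. F (ltr_maxima (snd p @ [y])))"
    by (subst sum.reindex[OF injB]) simp
  finally have S: "(\<Sum>p\<in>pre (L@[y]) x. F (ltr_maxima (snd p))) =
     (\<Sum>p\<in>pre L y. F (ltr_maxima (snd p @ [x]))) + (\<Sum>p\<in>pre L x. F (ltr_maxima (snd p @ [y])))" .
  show ?case
  proof (cases "\<forall>a\<in>set L. a \<le> y")
    case False
    have "(\<Sum>p\<in>pre L x. F (ltr_maxima (snd p @ [y]))) = (\<Sum>p\<in>pre L x. F (ltr_maxima (snd p)))"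
    proof (rule sum.cong[OF refl])
      fix p assume p: "p \<in> pre L x"
      obtain a where a: "a \<in> set L" "\<not> a \<le> y" using False by auto
      have "a \<in> set (fst (pass (fst p) (snd p)))" using p a unfolding pre_def by auto
      then obtain b where "b \<in> set (snd p)" "a \<le> b" using pass_dom by blast
      then have "\<not> (\<forall>b\<in>set (snd p). b \<le> y)" using a by (metis le_trans)
      then show "F (ltr_maxima (snd p @ [y])) = F (ltr_maxima (snd p))"
        by (auto simp: ltr_maxima_snoc)
    qed
    moreover have T: "ltr_maxima (L@[y]) = ltr_maxima L" using False by (auto simp: ltr_maxima_snoc)
    ultimately show ?thesis unfolding T using S pre_empty[OF False] snoc.IH[OF dL Lx, of F]
      by simp
  next
    case True
    have Ly: "\<forall>a\<in>set L. a < y" using True snoc.prems(1) by (auto simp: le_less)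
    have SA: "(\<Sum>p\<in>pre L y. F (ltr_maxima (snd p @ [x]))) = (\<Sum>p\<in>pre L y. F (Suc (ltr_maxima (snd p))))"
    proof (rule sum.cong[OF refl])
      fix p assume p: "p \<in> pre L y"
      have "\<forall>b\<in>set (snd p). b \<le> x"
        using p pass_M_max[of _ "snd p" "fst p"] yx unfolding pre_def by fastforce
      then show "F (ltr_maxima (snd p @ [x])) = F (Suc (ltr_maxima (snd p)))"
        by (simp add: ltr_maxima_snoc)
    qed
    have xL: "(x, L) \<in> pre L x" using Lx by (intro pre_self) auto
    have SB: "(\<Sum>p\<in>pre L x. F (ltr_maxima (snd p @ [y]))) = F (Suc ?i) + (\<Sum>p\<in>pre L x - {(x,L)}. F (ltr_maxima (snd p)))"
    proof -
      have "(\<Sum>p\<in>pre L x. F (ltr_maxima (snd p @ [y]))) = F (ltr_maxima (L @ [y])) + (\<Sum>p\<in>pre L x - {(x,L)}. F (ltr_maxima (snd p @ [y])))"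
        using xL by (subst sum.remove[of _ "(x,L)"]) (auto simp: pre_finite)
      also have "(\<Sum>p\<in>pre L x - {(x,L)}. F (ltr_maxima (snd p @ [y]))) = (\<Sum>p\<in>pre L x - {(x,L)}. F (ltr_maxima (snd p)))"
      proof (rule sum.cong[OF refl])
        fix p assume p: "p \<in> pre L x - {(x,L)}"
        then have "x \<in> set (snd p)" using pre_cases[of p L x] by auto
        then have "\<not> (\<forall>b\<in>set (snd p). b \<le> y)" using yx by force
        then show "F (ltr_maxima (snd p @ [y])) = F (ltr_maxima (snd p))"
          by (auto simp: ltr_maxima_snoc)
      qed
      finally show ?thesis using True by (simp add: ltr_maxima_snoc)
    qed
    have R: "(\<Sum>p\<in>pre L x - {(x,L)}. F (ltr_maxima (snd p))) = (\<Sum>k<?i. (?i choose k) * F (Suc k))"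
    proof -
      have "(\<Sum>p\<in>pre L x. F (ltr_maxima (snd p))) = F ?i + (\<Sum>p\<in>pre L x - {(x,L)}. F (ltr_maxima (snd p)))"
        using xL by (subst sum.remove[of _ "(x,L)"]) (auto simp: pre_finite)
      then show ?thesis using snoc.IH[OF dL Lx, of F] by simp
    qed
    have IHy: "(\<Sum>p\<in>pre L y. F (Suc (ltr_maxima (snd p)))) = F (Suc ?i) + (\<Sum>k<?i. (?i choose k) * F (Suc (Suc k)))"
      using snoc.IH[OF dL Ly, of "\<lambda>u. F (Suc u)"] by simp
    have T: "ltr_maxima (L@[y]) = Suc ?i" using True by (simp add: ltr_maxima_snoc)
    show ?thesis
      unfolding S SA SB R IHy T binom_shift[of ?i "\<lambda>k. F (Suc k)"] by simp
  qed
qed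


lemma grid_length_snd [simp]: "length (snd (grid ls rs)) = length ls"
  by (induction ls) auto

lemma grid_length_fst [simp]: "length (fst (grid ls rs)) = length rs"
  by (induction ls) auto

lemma grid_mset: "mset (fst (grid ls rs)) + mset (snd (grid ls rs)) = mset ls + mset rs"
proof (induction ls)
  case Nil then show ?case by simp
next
  case (Cons v ls)
  have "add_mset (snd (pass v (fst (grid ls rs)))) (mset (fst (pass v (fst (grid ls rs)))))
      = add_mset v (mset (fst (grid ls rs)))" by (rule pass_mset)
  then have "mset (fst (grid (v#ls) rs)) + mset (snd (grid (v#ls) rs))
      = add_mset v (mset (fst (grid ls rs))) + mset (snd (grid ls rs))" by simp
  also have "\<dots> = add_mset v (mset ls + mset rs)" using Cons.IH by simp
  finally show ?case by simp
qed

lemma grid_le: "a \<in> set (fst (grid ls rs)) \<Longrightarrow> b \<in> set (snd (grid ls rs)) \<Longrightarrow> a \<le> b"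
proof (induction ls arbitrary: a b)
  case Nil then show ?case by simp
next
  case (Cons v ls)
  from Cons.prems(1) have a: "a \<in> set (fst (pass v (fst (grid ls rs))))" by simp
  show ?case
  proof (cases "b = snd (pass v (fst (grid ls rs)))")
    case True then show ?thesis using pass_le_M[OF a] by simp
  next
    case False
    then have b: "b \<in> set (snd (grid ls rs))" using Cons.prems(2) by simp
    obtain c where "c \<in> set (fst (grid ls rs))" "a \<le> c" using pass_dom[OF a] by blast
    then show ?thesis using Cons.IH[OF _ b] by (meson le_trans)
  qed
qed

lemma gridw_Suc: "gridw (Suc q) (v#w) = (fst (pass v (fst (gridw q w))), snd (pass v (fst (gridw q w))) # snd (gridw q w))"
  by (simp add: gridw_def)

lemma gridw_mset: "mset w = mset (fst (gridw q w)) + mset (snd (gridw q w))"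
  unfolding gridw_def grid_mset by (simp flip: mset_append)

lemma gridw_le: "a \<in> set (fst (gridw q w)) \<Longrightarrow> b \<in> set (snd (gridw q w)) \<Longrightarrow> a \<le> b"
  unfolding gridw_def by (rule grid_le)

lemma gridw_finite: "finite {w. gridw q w = (L,R)}"
proof -
  have "{w. gridw q w = (L,R)} \<subseteq> {w. set w \<subseteq> set (L@R) \<and> length w = length (L@R)}"
  proof
    fix w assume "w \<in> {w. gridw q w = (L,R)}"
    then have M: "mset w = mset (L@R)" using gridw_mset[of w q] by simp
    show "w \<in> {w. set w \<subseteq> set (L@R) \<and> length w = length (L@R)}"
    proof -
      have "set w = set (L@R)" using arg_cong[OF M, of set_mset] by simp
      moreover have "length w = length (L@R)" using arg_cong[OF M, of size] by simp
      ultimately show ?thesis by simp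
    qed
  qed
  moreover have "finite {w. set w \<subseteq> set (L@R) \<and> length w = length (L@R)}"
    by (rule finite_lists_length_eq) simp
  ultimately show ?thesis by (rule finite_subset)
qed

lemma gridw_0: "gridw 0 w = (w, [])"
  by (simp add: gridw_def)

lemma gridw_set_Suc:
  "{w. gridw (Suc q) w = (L, x#R)} = (\<Union>p\<in>pre L x. (\<lambda>w'. fst p # w') ` {w'. gridw q w' = (snd p, R)})"
proof (intro equalityI subsetI)
  fix w assume w: "w \<in> {w. gridw (Suc q) w = (L, x#R)}"
  have "w \<noteq> []" using w by (auto simp: gridw_def)
  then obtain v w' where ww: "w = v # w'" by (cases w) auto
  let ?os = "fst (gridw q w')"
  have "gridw (Suc q) (v#w') = (L, x#R)" using w ww by simp
  then have 1: "pass v ?os = (L, x)" and 2: "snd (gridw q w') = R"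
    unfolding gridw_Suc by (auto simp: prod_eq_iff)
  have "(v, ?os) \<in> pre L x" using 1 by (simp add: pre_def)
  moreover have "w' \<in> {w'. gridw q w' = (?os, R)}" using 2 by (simp add: prod_eq_iff)
  ultimately show "w \<in> (\<Union>p\<in>pre L x. (\<lambda>w'. fst p # w') ` {w'. gridw q w' = (snd p, R)})"
    unfolding ww by force
next
  fix w assume "w \<in> (\<Union>p\<in>pre L x. (\<lambda>w'. fst p # w') ` {w'. gridw q w' = (snd p, R)})"
  then obtain v os w' where "(v,os) \<in> pre L x" "gridw q w' = (os, R)" "w = v # w'" by auto
  then show "w \<in> {w. gridw (Suc q) w = (L, x#R)}" by (simp add: gridw_Suc pre_def)
qed

lemma distinct_sub: "distinct ys \<Longrightarrow> mset xs \<subseteq># mset ys \<Longrightarrow> distinct xs"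
proof -
  assume d: "distinct ys" and sub: "mset xs \<subseteq># mset ys"
  have "count (mset xs) a \<le> 1" for a
  proof (cases "a \<in> set xs")
    case False
    then have "count (mset xs) a = 0" by simp
    then show ?thesis by linarith
  next
    case True then show ?thesis
      using mset_subset_eq_count[OF sub, of a] d by (simp add: distinct_count_atmost_1 split: if_splits)
  qed
  then have "count (mset xs) a = (if a \<in> set xs then 1 else 0)" for a
    by (metis count_eq_zero_iff le_antisym less_one not_le set_mset_mset)
  then show "distinct xs" by (simp add: distinct_count_atmost_1)
qed

lemma count_main:
  assumes "length R = q" "distinct (L@R)" "\<forall>a\<in>set L. \<forall>b\<in>set R. a < b"
  shows "card {w. gridw q w = (L,R)} = cc (ltr_maxima L) (rtl_minima R)"
  using assms
proof (induction q arbitrary: L R)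
  case 0
  then have "R = []" by simp
  moreover have "{w. gridw 0 w = (L,[])} = {L}" by (auto simp: gridw_0)
  ultimately show ?case by (simp add: rtl_minima_def)
next
  case (Suc q)
  then obtain x R' where R: "R = x # R'" by (cases R) auto
  have lenR': "length R' = q" using Suc.prems R by simp
  have dist: "distinct (L @ x # R')" using Suc.prems R by simp
  have LR: "\<forall>a\<in>set L. \<forall>b\<in>set (x#R'). a < b" using Suc.prems R by simp
  have Lx: "\<forall>a\<in>set L. a < x" using LR by simp
  let ?i = "ltr_maxima L" and ?j = "rtl_minima R'"
  let ?c = "\<lambda>p. card {w'. gridw q w' = (snd p, R')}"
  have card_eq: "card {w. gridw (Suc q) w = (L, x#R')} = (\<Sum>p\<in>pre L x. ?c p)"
  proof -
    have "card (\<Union>p\<in>pre L x. (\<lambda>w'. fst p # w') ` {w'. gridw q w' = (snd p, R')})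
        = (\<Sum>p\<in>pre L x. card ((\<lambda>w'. fst p # w') ` {w'. gridw q w' = (snd p, R')}))"
    proof (rule card_UN_disjoint)
      show "finite (pre L x)" by (rule pre_finite)
      show "\<forall>p\<in>pre L x. finite ((\<lambda>w'. fst p # w') ` {w'. gridw q w' = (snd p, R')})"
        using gridw_finite by auto
      show "\<forall>p\<in>pre L x. \<forall>p'\<in>pre L x. p \<noteq> p' \<longrightarrow>
          (\<lambda>w'. fst p # w') ` {w'. gridw q w' = (snd p, R')} \<inter> (\<lambda>w'. fst p' # w') ` {w'. gridw q w' = (snd p', R')} = {}"
        by (auto simp: prod_eq_iff)
    qed
    also have "\<dots> = (\<Sum>p\<in>pre L x. ?c p)"
      by (intro sum.cong refl card_image) (simp add: inj_on_def)
    finally show ?thesis unfolding gridw_set_Suc .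
  qed
  have props: "distinct (snd p) \<and> set (snd p) \<subseteq> set (x#L)" if p: "p \<in> pre L x" for p
  proof -
    obtain v os where pp: "p = (v, os)" and P: "pass v os = (L,x)" using p unfolding pre_def by auto
    have M: "add_mset x (mset L) = add_mset v (mset os)" using pass_mset[of v os] P by simp
    have "mset os \<subseteq># mset os + {#v#}" by (rule mset_subset_eq_add_left)
    then have sub: "mset os \<subseteq># mset (x#L)" using M by simp
    have "distinct (x#L)" using dist by auto
    then have "distinct os" using sub by (rule distinct_sub)
    moreover have "set os \<subseteq> set (x#L)" using sub by (metis mset_subset_eqD set_mset_mset subsetI)
    ultimately show ?thesis using pp by simp
  qed
  have cval: "?c p = (if \<forall>a\<in>set (snd p). \<forall>b\<in>set R'. a < b then cc (ltr_maxima (snd p)) ?j else 0)"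
    if p: "p \<in> pre L x" for p
  proof (cases "\<forall>a\<in>set (snd p). \<forall>b\<in>set R'. a < b")
    case True
    have "distinct (snd p @ R')" using props[OF p] dist by auto
    then show ?thesis using True Suc.IH[OF lenR'] by simp
  next
    case False
    have disj: "set (snd p) \<inter> set R' = {}" using props[OF p] dist by auto
    have "{w'. gridw q w' = (snd p, R')} = {}"
    proof (rule ccontr)
      assume "{w'. gridw q w' = (snd p, R')} \<noteq> {}"
      then obtain w' where w': "gridw q w' = (snd p, R')" by auto
      have "\<forall>a\<in>set (snd p). \<forall>b\<in>set R'. a \<le> b" using gridw_le[of _ q w'] w' by auto
      then have "\<forall>a\<in>set (snd p). \<forall>b\<in>set R'. a < b" using disj by (auto simp: le_less)
      then show False using False by simp
    qed
    then show ?thesis using False by (simp only: if_False) simp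
  qed
  show ?case
  proof (cases "\<forall>b\<in>set R'. x \<le> b")
    case True
    have "(\<Sum>p\<in>pre L x. ?c p) = (\<Sum>p\<in>pre L x. cc (ltr_maxima (snd p)) ?j)"
    proof (rule sum.cong[OF refl])
      fix p assume p: "p \<in> pre L x"
      have "\<forall>a\<in>set (snd p). \<forall>b\<in>set R'. a < b"
      proof (intro ballI)
        fix a b assume a: "a \<in> set (snd p)" and b: "b \<in> set R'"
        have "a \<in> set (x#L)" using props[OF p] a by auto
        then show "a < b" using LR True b dist by (auto simp: le_less)
      qed
      then show "?c p = cc (ltr_maxima (snd p)) ?j" using cval[OF p] by simp
    qed
    also have "\<dots> = cc ?i ?j + (\<Sum>k<?i. (?i choose k) * cc (Suc k) ?j)"
      using pre_sum[of L x "\<lambda>u. cc u ?j"] dist Lx by simp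
    also have "\<dots> = cc ?i (Suc ?j)" by simp
    finally show ?thesis using card_eq True R by (simp add: rtl_minima_Cons)
  next
    case False
    have xL: "(x, L) \<in> pre L x" using Lx by (intro pre_self) auto
    have "(\<Sum>p\<in>pre L x. ?c p) = ?c (x,L) + (\<Sum>p\<in>pre L x - {(x,L)}. ?c p)"
      using xL by (subst sum.remove[of _ "(x,L)"]) (auto simp: pre_finite)
    also have "(\<Sum>p\<in>pre L x - {(x,L)}. ?c p) = 0"
    proof (rule sum.neutral, rule ballI)
      fix p assume p: "p \<in> pre L x - {(x,L)}"
      then have "x \<in> set (snd p)" using pre_cases[of p L x] by auto
      then have nc: "\<not> (\<forall>a\<in>set (snd p). \<forall>b\<in>set R'. a < b)" using False by force
      have pp: "p \<in> pre L x" using p by simp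
      show "?c p = 0" by (subst cval[OF pp]) (simp only: if_not_P[OF nc])
    qed
    also have "?c (x,L) = cc ?i ?j" using cval[OF xL] LR by simp
    moreover have T: "rtl_minima (x#R') = rtl_minima R'" using False by (auto simp: rtl_minima_Cons)
    ultimately show ?thesis using card_eq R by simp
  qed
qed



lemma card_idx: "card {a. a < length xs \<and> xs ! a = s} = count (mset xs) s"
proof -
  have "count (mset xs) s = length (filter ((=) s) xs)"
    by (simp add: count_mset count_list_eq_length_filter)
  also have "\<dots> = card {i. i < length xs \<and> s = xs ! i}" by (rule length_filter_conv_card)
  also have "{i. i < length xs \<and> s = xs ! i} = {a. a < length xs \<and> xs ! a = s}" by auto
  finally show ?thesis by simp
qed

definition alt :: "(int \<Rightarrow> nat) \<Rightarrow> bool" where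
  "alt c \<longleftrightarrow> (\<forall>t. c t \<le> 2) \<and> (\<forall>a b. a < b \<and> c a = 2 \<and> c b = 2 \<longrightarrow> (\<exists>u. a < u \<and> u < b \<and> c u = 0))"

definition Inv :: "int list \<Rightarrow> bool" where
  "Inv xs \<longleftrightarrow> alt (count (mset xs))"

lemma alt_step:
  assumes A: "alt c" and cs: "c s \<ge> 2"
    and c': "\<And>t. c' t = (if t = s then c s - 2 else if t = s - 1 \<or> t = s + 1 then c t + 1 else c t)"
  shows "alt c'"
proof -
  have le2: "\<forall>t. c t \<le> 2" and alt2: "\<And>a b. a < b \<Longrightarrow> c a = 2 \<Longrightarrow> c b = 2 \<Longrightarrow> \<exists>u. a < u \<and> u < b \<and> c u = 0"
    using A unfolding alt_def by auto
  have cs2: "c s = 2" using le2 cs by (metis le_antisym)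
  have n1: "c (s+1) \<noteq> 2"
  proof
    assume "c (s+1) = 2"
    then obtain u where "s < u" "u < s + 1" using alt2[of s "s+1"] cs2 by auto
    then show False by simp
  qed
  have n2: "c (s-1) \<noteq> 2"
  proof
    assume "c (s-1) = 2"
    then obtain u where "s - 1 < u" "u < s" using alt2[of "s-1" s] cs2 by auto
    then show False by simp
  qed
  have "c' t \<le> 2" for t
  proof -
    have "c (s-1) \<le> 2" "c (s+1) \<le> 2" using le2 by auto
    then have "c (s-1) \<le> 1" "c (s+1) \<le> 1" using n1 n2 by linarith+
    then show ?thesis using c'[of t] le2 cs2 by auto
  qed
  moreover have "\<exists>u. a < u \<and> u < b \<and> c' u = 0" if ab: "a < b" "c' a = 2" "c' b = 2" for a b
  proof -
    have s0: "c' s = 0" using c'[of s] cs2 by simp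
    have ca: "a \<noteq> s" using ab s0 by auto
    have cb: "b \<noteq> s" using ab s0 by auto
    show ?thesis
    proof (cases "a = s - 1 \<or> b = s + 1")
      case True
      then have "a < s \<and> s < b" using ab ca cb by auto
      then show ?thesis using s0 by blast
    next
      case False
      then have na: "a \<noteq> s - 1" and nb: "b \<noteq> s + 1" by auto
      show ?thesis
      proof (cases "a = s + 1")
        case True
        then have "b \<noteq> s - 1" using ab by auto
        then have cb2: "c b = 2" using c'[of b] ab cb nb by auto
        obtain u where u: "s < u" "u < b" "c u = 0" using alt2[of s b] cs2 cb2 ab True by auto
        have "u \<noteq> s + 1" using c'[of a] ab True u by auto
        then have "a < u" "u < b" "c' u = 0" using u True c'[of u] by auto
        then show ?thesis by blast
      next
        case False
        then have ca2: "c a = 2" using c'[of a] ab ca na by auto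
        show ?thesis
        proof (cases "b = s - 1")
          case True
          obtain u where u: "a < u" "u < s" "c u = 0" using alt2[of a s] cs2 ca2 ab True by auto
          have "u \<noteq> s - 1" using c'[of b] ab True u by auto
          then show ?thesis using u True c'[of u] by auto
        next
          case False
          then have cb2: "c b = 2" using c'[of b] ab cb nb by auto
          obtain u where u: "a < u" "u < b" "c u = 0" using alt2[of a b] ab ca2 cb2 by auto
          show ?thesis
          proof (cases "u = s - 1 \<or> u = s + 1")
            case True
            then have "a < s \<and> s < b" using u ab ca cb na nb False \<open>a \<noteq> s + 1\<close> by auto
            then show ?thesis using s0 by blast
          next
            case False
            have "u \<noteq> s" using u cs2 by auto
            then show ?thesis using u False c'[of u] by auto
          qed
        qed
      qed
    qed
  qed
  ultimately show ?thesis unfolding alt_def by auto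
qed


lemma step_count:
  fixes xs :: "int list"
  assumes ab: "\<alpha> < \<beta>" "\<beta> < length xs" and eq: "xs ! \<alpha> = xs ! \<beta>"
  defines "s \<equiv> xs ! \<alpha>"
  shows "count (mset xs) s \<ge> 2"
    and "count (mset (xs[\<alpha> := xs ! \<alpha> - 1, \<beta> := xs ! \<beta> + 1])) t =
      (if t = s then count (mset xs) s - 2 else if t = s - 1 \<or> t = s + 1 then count (mset xs) t + 1 else count (mset xs) t)"
proof -
  let ?ys1 = "xs[\<alpha> := s - 1]"
  have a: "\<alpha> < length xs" using ab by simp
  have M1: "mset ?ys1 = add_mset (s-1) (mset xs - {#s#})" using mset_update[OF a] s_def by simp
  have b1: "?ys1 ! \<beta> = s" using ab eq s_def by simp
  have M2: "mset (?ys1[\<beta> := s + 1]) = add_mset (s+1) (mset ?ys1 - {#s#})"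
    using mset_update[of \<beta> ?ys1 "s+1"] ab b1 by simp
  have "s \<in># mset ?ys1" using b1 ab by (metis in_set_conv_nth length_list_update set_mset_mset)
  then have "count (mset ?ys1) s \<ge> 1" by (simp add: Suc_le_eq)
  moreover have ne: "s - 1 \<noteq> s" "s + 1 \<noteq> s" "s - 1 \<noteq> s + 1" "s \<noteq> s - 1" "s \<noteq> s + 1" "s + 1 \<noteq> s - 1" by auto
  ultimately show c2: "count (mset xs) s \<ge> 2" using M1 by simp
  have "xs[\<alpha> := xs ! \<alpha> - 1, \<beta> := xs ! \<beta> + 1] = ?ys1[\<beta> := s + 1]" using eq s_def by simp
  then show "count (mset (xs[\<alpha> := xs ! \<alpha> - 1, \<beta> := xs ! \<beta> + 1])) t =
      (if t = s then count (mset xs) s - 2 else if t = s - 1 \<or> t = s + 1 then count (mset xs) t + 1 else count (mset xs) t)"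
  proof -
    have C: "count (mset (?ys1[\<beta> := s + 1])) t = (if t = s + 1 then 1 else 0) + (if t = s - 1 then 1 else 0) + count (mset xs) t - (if t = s then 2 else 0)"
      unfolding M2 M1 using ne c2 by auto
    show ?thesis unfolding \<open>xs[\<alpha> := xs ! \<alpha> - 1, \<beta> := xs ! \<beta> + 1] = ?ys1[\<beta> := s + 1]\<close> C using ne by auto
  qed
qed

lemma Inv_step: "Inv xs \<Longrightarrow> topple_step xs ys \<Longrightarrow> Inv ys"
  unfolding topple_step_def Inv_def
proof (elim exE conjE)
  fix \<alpha> \<beta> assume A: "alt (count (mset xs))" and ab: "\<alpha> < \<beta>" "\<beta> < length xs" "xs ! \<alpha> = xs ! \<beta>"
    and ys: "ys = xs[\<alpha> := xs ! \<alpha> - 1, \<beta> := xs ! \<beta> + 1]"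
  show "alt (count (mset ys))"
    unfolding ys by (rule alt_step[OF A step_count(1)[OF ab]]) (rule step_count(2)[OF ab])
qed

lemma Inv_steps: "topple_step\<^sup>*\<^sup>* xs ys \<Longrightarrow> Inv xs \<Longrightarrow> Inv ys"
  by (induction rule: rtranclp_induct) (auto intro: Inv_step)

lemma step_length: "topple_step xs ys \<Longrightarrow> length ys = length xs"
  unfolding topple_step_def by auto

lemma two_idx:
  assumes "count (mset xs) s \<le> 2" "i < j" "j < length xs" "xs ! i = s" "xs ! j = s"
    "i' < j'" "j' < length xs" "xs ! i' = s" "xs ! j' = s"
  shows "i = i' \<and> j = j'"
proof (rule ccontr)
  assume ne: "\<not> (i = i' \<and> j = j')"
  let ?S = "{a. a < length xs \<and> xs ! a = s}"
  have "\<exists>k. k \<in> ?S \<and> k \<noteq> i \<and> k \<noteq> j"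
  proof (cases "i' = i \<or> i' = j")
    case True
    then have "j' \<noteq> i \<and> j' \<noteq> j" using ne assms(2,6) by auto
    then show ?thesis using assms(7,9) by auto
  next
    case False
    then have "i' \<in> ?S" "i' \<noteq> i" "i' \<noteq> j" using assms(6,7,8) by auto
    then show ?thesis by blast
  qed
  then obtain k where k: "k \<in> ?S" "k \<noteq> i" "k \<noteq> j" by blast
  have sub: "{i, j, k} \<subseteq> ?S" using assms k by auto
  have "card {i, j, k} = 3" using k assms(2) by auto
  then have "3 \<le> card ?S" using card_mono[OF _ sub] by simp
  moreover have "card ?S \<le> 2" using assms(1) card_idx[of xs s] by simp
  ultimately show False by simp
qed

lemma diamond:
  assumes I: "Inv xs" and y: "topple_step xs y" and z: "topple_step xs z"
  shows "y = z \<or> (\<exists>u. topple_step y u \<and> topple_step z u)"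
proof -
  obtain a b where ab: "a < b" "b < length xs" "xs ! a = xs ! b" and yy: "y = xs[a := xs ! a - 1, b := xs ! b + 1]"
    using y unfolding topple_step_def by blast
  obtain a' b' where ab': "a' < b'" "b' < length xs" "xs ! a' = xs ! b'" and zz: "z = xs[a' := xs ! a' - 1, b' := xs ! b' + 1]"
    using z unfolding topple_step_def by blast
  have le2: "count (mset xs) t \<le> 2" for t using I unfolding Inv_def alt_def by blast
  show ?thesis
  proof (cases "xs ! a = xs ! a'")
    case True
    have "a = a' \<and> b = b'"
      by (rule two_idx[OF le2[of "xs ! a"] ab(1,2) refl ab(3)[symmetric] ab'(1,2)]) (use True ab' in simp_all)
    then show ?thesis using yy zz by simp
  next
    case False
    have d: "a \<noteq> a'" "a \<noteq> b'" "b \<noteq> a'" "b \<noteq> b'" using False ab ab' by metis+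
    define u where "u = xs[a := xs ! a - 1, b := xs ! b + 1, a' := xs ! a' - 1, b' := xs ! b' + 1]"
    have ly: "length y = length xs" "length z = length xs" using yy zz by simp_all
    have ya: "y ! a' = xs ! a'" "y ! b' = xs ! b'" using yy d by simp_all
    have za: "z ! a = xs ! a" "z ! b = xs ! b" using zz d by simp_all
    have u0: "u = y[a' := xs ! a' - 1, b' := xs ! b' + 1]" unfolding u_def yy ..
    have u1: "u = y[a' := y ! a' - 1, b' := y ! b' + 1]" using u0 by (simp only: ya)
    have u2: "u = z[a := z ! a - 1, b := z ! b + 1]"
    proof -
      have "u = xs[a' := xs ! a' - 1, b' := xs ! b' + 1, a := xs ! a - 1, b := xs ! b + 1]"
        unfolding u_def using d ab ab' by (intro nth_equalityI) (auto simp: nth_list_update)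
      then have "u = z[a := xs ! a - 1, b := xs ! b + 1]" unfolding zz .
      then show ?thesis by (simp only: za)
    qed
    have "topple_step y u"
      unfolding topple_step_def using ab' ly ya u1 by metis
    moreover have "topple_step z u"
      unfolding topple_step_def using ab ly za u2 by metis
    ultimately show ?thesis by blast
  qed
qed

lemma strip:
  assumes "topple_step\<^sup>*\<^sup>* x y" "Inv x" "topple_step x z"
  shows "\<exists>u. topple_step\<^sup>=\<^sup>= y u \<and> topple_step\<^sup>*\<^sup>* z u"
  using assms
proof (induction arbitrary: z rule: converse_rtranclp_induct)
  case base
  then show ?case by auto
next
  case (step x x1)
  have I1: "Inv x1" using Inv_step step by blast
  from diamond[OF step.prems(1) step.hyps(1) step.prems(2)]
  show ?case
  proof
    assume "x1 = z"
    then show ?thesis using step.hyps(2) by auto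
  next
    assume "\<exists>u. topple_step x1 u \<and> topple_step z u"
    then obtain w where w: "topple_step x1 w" "topple_step z w" by blast
    obtain u where "topple_step\<^sup>=\<^sup>= y u" "topple_step\<^sup>*\<^sup>* w u" using step.IH[OF I1 w(1)] by blast
    then show ?thesis using w(2) by (meson converse_rtranclp_into_rtranclp)
  qed
qed

lemma confl:
  assumes "topple_step\<^sup>*\<^sup>* x z" "Inv x" "topple_step\<^sup>*\<^sup>* x y"
  shows "\<exists>u. topple_step\<^sup>*\<^sup>* y u \<and> topple_step\<^sup>*\<^sup>* z u"
  using assms
proof (induction arbitrary: y rule: converse_rtranclp_induct)
  case base
  then show ?case by auto
next
  case (step x x1)
  have I1: "Inv x1" using Inv_step step by blast
  obtain u where u: "topple_step\<^sup>=\<^sup>= y u" "topple_step\<^sup>*\<^sup>* x1 u" using strip[OF step.prems(2,1) step.hyps(1)] by blast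
  obtain v where "topple_step\<^sup>*\<^sup>* u v" "topple_step\<^sup>*\<^sup>* z v" using step.IH[OF I1 u(2)] by blast
  moreover have "topple_step\<^sup>*\<^sup>* y u" using u(1) by auto
  ultimately show ?case by (meson rtranclp_trans)
qed

lemma stable_no_step: "distinct y \<Longrightarrow> \<not> topple_step y u"
  unfolding topple_step_def by (auto simp: nth_eq_iff_index_eq)

lemma stable_steps: "topple_step\<^sup>*\<^sup>* y u \<Longrightarrow> distinct y \<Longrightarrow> u = y"
  by (induction rule: converse_rtranclp_induct) (auto simp: stable_no_step)

lemma unique_nf:
  assumes "Inv x" "topple_step\<^sup>*\<^sup>* x y" "topple_step\<^sup>*\<^sup>* x z" "distinct y" "distinct z"
  shows "y = z"
proof -
  obtain u where "topple_step\<^sup>*\<^sup>* y u" "topple_step\<^sup>*\<^sup>* z u" using confl[OF assms(3,1,2)] by blast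
  then have "u = y" "u = z" using stable_steps assms(4,5) by auto
  then show ?thesis by simp
qed



lemma pass_steps:
  fixes xs :: "int list"
  assumes "distinct (c # rs)" "\<forall>l\<in>set (c#rs). 1 \<le> l \<and> l \<le> length xs"
    "xs ! (c - 1) = s" "\<forall>b<length rs. xs ! (rs ! b - 1) = s + int b"
  shows "\<exists>ys. topple_step\<^sup>*\<^sup>* xs ys \<and> length ys = length xs
    \<and> (\<forall>b<length rs. ys ! (fst (pass c rs) ! b - 1) = s - 1 + int b)
    \<and> ys ! (snd (pass c rs) - 1) = s + int (length rs)
    \<and> (\<forall>a<length xs. Suc a \<notin> set (c#rs) \<longrightarrow> ys ! a = xs ! a)"
  using assms
proof (induction rs arbitrary: c s xs)
  case Nil
  then show ?case by (intro exI[of _ xs]) auto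
next
  case (Cons r rs)
  define lo where "lo = min c r"
  define hi where "hi = max c r"
  have cr: "c \<noteq> r" using Cons.prems(1) by auto
  have lohi: "lo < hi" using cr unfolding lo_def hi_def by auto
  have c1: "1 \<le> c" "c \<le> length xs" "1 \<le> r" "r \<le> length xs" using Cons.prems(2) by auto
  have rpos: "xs ! (r - 1) = s" using Cons.prems(4)[rule_format, of 0] by simp
  have lopos: "xs ! (lo - 1) = s" and hipos: "xs ! (hi - 1) = s"
    using Cons.prems(3) rpos unfolding lo_def hi_def by (auto simp: min_def max_def)
  have lo1: "1 \<le> lo" "lo \<le> length xs" and hi1: "1 \<le> hi" "hi \<le> length xs"
    using c1 unfolding lo_def hi_def by (auto simp: min_def max_def)
  define xs1 where "xs1 = xs[lo - 1 := xs ! (lo - 1) - 1, hi - 1 := xs ! (hi - 1) + 1]"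
  have step: "topple_step xs xs1"
    unfolding topple_step_def xs1_def
    using lohi lo1 hi1 lopos hipos by (intro exI[of _ "lo - 1"] exI[of _ "hi - 1"]) auto
  have len1: "length xs1 = length xs" unfolding xs1_def by simp
  have x1lo: "xs1 ! (lo - 1) = s - 1" unfolding xs1_def using lohi lo1 hi1 lopos by (simp add: nth_list_update)
  have x1hi: "xs1 ! (hi - 1) = s + 1" unfolding xs1_def using lohi lo1 hi1 hipos by (simp add: nth_list_update)
  have x1other: "xs1 ! a = xs ! a" if "a \<noteq> lo - 1" "a \<noteq> hi - 1" for a
    unfolding xs1_def using that by simp
  have setcr: "{lo, hi} = {c, r}" unfolding lo_def hi_def by (auto simp: min_def max_def)
  have d1: "distinct (hi # rs)" using Cons.prems(1) setcr by (auto simp: hi_def max_def)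
  have r1: "\<forall>l\<in>set (hi#rs). 1 \<le> l \<and> l \<le> length xs1" using Cons.prems(2) len1 hi1 by auto
  have p1: "\<forall>b<length rs. xs1 ! (rs ! b - 1) = (s + 1) + int b"
  proof (intro allI impI)
    fix b assume b: "b < length rs"
    have "rs ! b \<in> set rs" using b by simp
    then have ne: "rs ! b \<noteq> c" "rs ! b \<noteq> r" using Cons.prems(1) by auto
    have "rs ! b \<ge> 1" using Cons.prems(2) \<open>rs ! b \<in> set rs\<close> by auto
    then have "rs ! b - 1 \<noteq> lo - 1" "rs ! b - 1 \<noteq> hi - 1"
      using ne lo1 hi1 setcr by (auto simp: lo_def hi_def min_def max_def split: if_splits)
    then have "xs1 ! (rs ! b - 1) = xs ! (rs ! b - 1)" by (rule x1other)
    also have "\<dots> = s + int (Suc b)" using Cons.prems(4) b by auto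
    finally show "xs1 ! (rs ! b - 1) = (s + 1) + int b" by simp
  qed
  obtain ys where ys: "topple_step\<^sup>*\<^sup>* xs1 ys" "length ys = length xs1"
    "\<forall>b<length rs. ys ! (fst (pass hi rs) ! b - 1) = (s + 1) - 1 + int b"
    "ys ! (snd (pass hi rs) - 1) = (s + 1) + int (length rs)"
    "\<forall>a<length xs1. Suc a \<notin> set (hi#rs) \<longrightarrow> ys ! a = xs1 ! a"
    using Cons.IH[OF d1 r1 x1hi p1] by blast
  have P: "pass c (r#rs) = (lo # fst (pass hi rs), snd (pass hi rs))"
    unfolding lo_def hi_def by simp
  have lo_notin: "Suc (lo - 1) \<notin> set (hi#rs)"
  proof -
    have "lo \<notin> set (hi#rs)" using Cons.prems(1) lohi setcr by (auto simp: lo_def min_def split: if_splits)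
    then show ?thesis using lo1 by simp
  qed
  show ?case
  proof (intro exI[of _ ys] conjI)
    show "topple_step\<^sup>*\<^sup>* xs ys" using step ys(1) by (meson converse_rtranclp_into_rtranclp)
    show "length ys = length xs" using ys(2) len1 by simp
    show "\<forall>b<length (r#rs). ys ! (fst (pass c (r#rs)) ! b - 1) = s - 1 + int b"
    proof (intro allI impI)
      fix b assume b: "b < length (r#rs)"
      show "ys ! (fst (pass c (r#rs)) ! b - 1) = s - 1 + int b"
      proof (cases b)
        case 0
        have "ys ! (lo - 1) = xs1 ! (lo - 1)"
          using ys(5) lo_notin lo1 len1 by auto
        then show ?thesis using 0 P x1lo by simp
      next
        case (Suc b')
        then show ?thesis using ys(3) b P by auto
      qed
    qed
    show "ys ! (snd (pass c (r#rs)) - 1) = s + int (length (r#rs))" using ys(4) P by simp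
    show "\<forall>a<length xs. Suc a \<notin> set (c#r#rs) \<longrightarrow> ys ! a = xs ! a"
    proof (intro allI impI)
      fix a assume a: "a < length xs" "Suc a \<notin> set (c#r#rs)"
      then have "a \<noteq> lo - 1" "a \<noteq> hi - 1" using lo1 hi1 setcr by (auto simp: lo_def hi_def min_def max_def split: if_splits)
      moreover have "Suc a \<notin> set (hi#rs)" using a setcr by (auto simp: hi_def max_def)
      ultimately show "ys ! a = xs ! a" using ys(5) a len1 x1other by auto
    qed
  qed
qed


lemma grid_mset2: "mset (fst (grid ls rs) @ snd (grid ls rs)) = mset (ls @ rs)"
  using grid_mset[of ls rs] by simp

lemma grid_distinct: "distinct (ls@rs) \<Longrightarrow> distinct (fst (grid ls rs) @ snd (grid ls rs))"
  using distinct_sub[of "ls@rs" "fst (grid ls rs) @ snd (grid ls rs)"] grid_mset2[of ls rs] by simp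

lemma grid_set: "set (fst (grid ls rs)) \<union> set (snd (grid ls rs)) = set ls \<union> set rs"
proof -
  have "set (fst (grid ls rs) @ snd (grid ls rs)) = set (ls @ rs)"
    using arg_cong[OF grid_mset2[of ls rs], of set_mset] by simp
  then show ?thesis by simp
qed

lemma grid_steps:
  fixes xs :: "int list"
  assumes "distinct (ls @ rs)" "\<forall>l\<in>set (ls@rs). 1 \<le> l \<and> l \<le> length xs"
    "\<forall>a<length ls. xs ! (ls ! a - 1) = s0 + int a"
    "\<forall>b<length rs. xs ! (rs ! b - 1) = s0 + int (length ls) - 1 + int b"
  shows "\<exists>ys. topple_step\<^sup>*\<^sup>* xs ys \<and> length ys = length xs
    \<and> (\<forall>b<length rs. ys ! (fst (grid ls rs) ! b - 1) = s0 - 1 + int b)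
    \<and> (\<forall>a<length ls. ys ! (snd (grid ls rs) ! a - 1) = s0 + int (length rs) + int a)
    \<and> (\<forall>a<length xs. Suc a \<notin> set (ls@rs) \<longrightarrow> ys ! a = xs ! a)"
  using assms
proof (induction ls arbitrary: s0 xs)
  case Nil
  then show ?case by (intro exI[of _ xs]) auto
next
  case (Cons v ls)
  have d: "distinct (ls @ rs)" using Cons.prems(1) by simp
  have r: "\<forall>l\<in>set (ls@rs). 1 \<le> l \<and> l \<le> length xs" using Cons.prems(2) by simp
  have p1: "\<forall>a<length ls. xs ! (ls ! a - 1) = (s0 + 1) + int a"
    using Cons.prems(3) by (auto simp flip: add.assoc)
  have p2: "\<forall>b<length rs. xs ! (rs ! b - 1) = (s0 + 1) + int (length ls) - 1 + int b"
    using Cons.prems(4) by simp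
  obtain ys1 where ys1: "topple_step\<^sup>*\<^sup>* xs ys1" "length ys1 = length xs"
    "\<forall>b<length rs. ys1 ! (fst (grid ls rs) ! b - 1) = (s0 + 1) - 1 + int b"
    "\<forall>a<length ls. ys1 ! (snd (grid ls rs) ! a - 1) = (s0 + 1) + int (length rs) + int a"
    "\<forall>a<length xs. Suc a \<notin> set (ls@rs) \<longrightarrow> ys1 ! a = xs ! a"
    using Cons.IH[OF d r p1 p2] by blast
  let ?o = "fst (grid ls rs)" and ?R = "snd (grid ls rs)"
  have dg: "distinct (?o @ ?R)" using grid_distinct[OF d] .
  have sg: "set ?o \<union> set ?R = set ls \<union> set rs" by (rule grid_set)
  have vnot: "v \<notin> set ls \<union> set rs" using Cons.prems(1) by auto
  have dv: "distinct (v # ?o)" using dg vnot sg by auto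
  have rv: "\<forall>l\<in>set (v # ?o). 1 \<le> l \<and> l \<le> length ys1" using Cons.prems(2) sg ys1(2) by auto
  have v1: "1 \<le> v" using Cons.prems(2) by simp
  have vpos: "ys1 ! (v - 1) = s0"
  proof -
    have "Suc (v - 1) \<notin> set (ls@rs)" using vnot v1 by simp
    moreover have "v - 1 < length xs" using Cons.prems(2) by auto
    ultimately have "ys1 ! (v - 1) = xs ! (v - 1)" using ys1(5) by blast
    then show ?thesis using Cons.prems(3)[rule_format, of 0] by simp
  qed
  have opos: "\<forall>b<length ?o. ys1 ! (?o ! b - 1) = s0 + int b" using ys1(3) by simp
  obtain ys where ys: "topple_step\<^sup>*\<^sup>* ys1 ys" "length ys = length ys1"
    "\<forall>b<length ?o. ys ! (fst (pass v ?o) ! b - 1) = s0 - 1 + int b"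
    "ys ! (snd (pass v ?o) - 1) = s0 + int (length ?o)"
    "\<forall>a<length ys1. Suc a \<notin> set (v # ?o) \<longrightarrow> ys ! a = ys1 ! a"
    using pass_steps[OF dv rv vpos opos] by blast
  show ?case
  proof (intro exI[of _ ys] conjI)
    show "topple_step\<^sup>*\<^sup>* xs ys" using ys1(1) ys(1) by (rule rtranclp_trans)
    show "length ys = length xs" using ys(2) ys1(2) by simp
    show "\<forall>b<length rs. ys ! (fst (grid (v#ls) rs) ! b - 1) = s0 - 1 + int b"
      using ys(3) by simp
    show "\<forall>a<length (v#ls). ys ! (snd (grid (v#ls) rs) ! a - 1) = s0 + int (length rs) + int a"
    proof (intro allI impI)
      fix a assume a: "a < length (v#ls)"
      show "ys ! (snd (grid (v#ls) rs) ! a - 1) = s0 + int (length rs) + int a"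
      proof (cases a)
        case 0
        then show ?thesis using ys(4) by simp
      next
        case (Suc a')
        have a': "a' < length ls" using a Suc by simp
        let ?l = "?R ! a'"
        have lR: "?l \<in> set ?R" using a' by simp
        have "?l \<notin> set (v # ?o)" using lR dg vnot sg by auto
        moreover have "1 \<le> ?l" "?l \<le> length ys1" using rv lR Cons.prems(2) sg ys1(2) by auto
        moreover have "Suc (?l - 1) = ?l" "?l - 1 < length ys1" using \<open>1 \<le> ?l\<close> \<open>?l \<le> length ys1\<close> by auto
        ultimately have "ys ! (?l - 1) = ys1 ! (?l - 1)" using ys(5) by metis
        then show ?thesis using ys1(4) a' Suc by simp
      qed
    qed
    show "\<forall>a<length xs. Suc a \<notin> set ((v#ls)@rs) \<longrightarrow> ys ! a = xs ! a"
    proof (intro allI impI)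
      fix a assume a: "a < length xs" "Suc a \<notin> set ((v#ls)@rs)"
      then have "Suc a \<notin> set (v # ?o)" using sg by auto
      then have "ys ! a = ys1 ! a" using ys(5) a ys1(2) by simp
      also have "\<dots> = xs ! a" using ys1(5) a by simp
      finally show "ys ! a = xs ! a" .
    qed
  qed
qed



definition P0 :: "nat \<Rightarrow> nat \<Rightarrow> int list" where
  "P0 m p = [1..int p] @ [int p..int m]"

definition Nw :: "nat \<Rightarrow> nat list \<Rightarrow> nat list" where
  "Nw p w = fst (gridw p w) @ snd (gridw p w)"

lemma P0_length: "1 \<le> p \<Longrightarrow> p \<le> m \<Longrightarrow> length (P0 m p) = m + 1"
  unfolding P0_def by simp

lemma P0_nth: "1 \<le> p \<Longrightarrow> p \<le> m \<Longrightarrow> t \<le> m \<Longrightarrow> P0 m p ! t = (if t < p then int t + 1 else int t)"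
  unfolding P0_def by (auto simp: nth_append nth_upto)

lemma P0_sorted: "sorted (P0 m p)"
  unfolding P0_def by (auto simp: sorted_append sorted_upto)

lemma P0_count: "1 \<le> p \<Longrightarrow> p \<le> m \<Longrightarrow>
  count (mset (P0 m p)) s = (if s = int p then 2 else if 1 \<le> s \<and> s \<le> int m then 1 else 0)"
proof -
  assume p: "1 \<le> p" "p \<le> m"
  have c1: "count (mset [a..b]) s = (if a \<le> s \<and> s \<le> b then 1 else 0)" for a b :: int
    using distinct_count_atmost_1[of "[a..b]"] by (simp add: distinct_upto)
  show ?thesis unfolding P0_def using p by (simp add: c1)
qed

lemma config_iff:
  assumes "1 \<le> p" "p \<le> m"
  shows "xs \<in> config_S m p \<longleftrightarrow> length xs = m + 1 \<and> mset xs = mset (P0 m p)"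
proof
  assume xs: "xs \<in> config_S m p"
  then have len: "length xs = m + 1" unfolding config_S_def by simp
  have "count (mset xs) s = count (mset (P0 m p)) s" for s
    using xs card_idx[of xs s] unfolding config_S_def P0_count[OF assms] by (simp add: len)
  then show "length xs = m + 1 \<and> mset xs = mset (P0 m p)" using len by (simp add: multiset_eq_iff)
next
  assume H: "length xs = m + 1 \<and> mset xs = mset (P0 m p)"
  show "xs \<in> config_S m p"
    unfolding config_S_def using H card_idx[of xs] P0_count[OF assms] by auto
qed

lemma config_Inv:
  assumes "1 \<le> p" "p \<le> m" "xs \<in> config_S m p"
  shows "Inv xs"
proof -
  have M: "mset xs = mset (P0 m p)" using config_iff[OF assms(1,2)] assms(3) by simp
  show ?thesis unfolding Inv_def alt_def M P0_count[OF assms(1,2)] by auto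
qed

lemma map_key_upt: "map (\<lambda>a. xs ! (a - 1)) [1..<length xs + 1] = xs"
  by (rule nth_equalityI) (simp_all del: upt_Suc)

lemma read_perm_props:
  assumes p: "1 \<le> p" "p \<le> m" and xs: "xs \<in> config_S m p"
  shows "mset (read_perm xs) = mset [1..<m+2]" "length (read_perm xs) = m + 1"
    "\<And>t. t \<le> m \<Longrightarrow> xs ! (read_perm xs ! t - 1) = P0 m p ! t"
proof -
  have len: "length xs = m + 1" and M: "mset xs = mset (P0 m p)" using config_iff[OF p] xs by auto
  let ?key = "\<lambda>a. xs ! (a - 1)"
  show M1: "mset (read_perm xs) = mset [1..<m+2]" unfolding read_perm_def len by simp
  show L1: "length (read_perm xs) = m + 1" using arg_cong[OF M1, of size] by simp
  have "mset (map ?key (read_perm xs)) = mset (map ?key [1..<length xs + 1])"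
    unfolding read_perm_def by simp
  also have "\<dots> = mset (P0 m p)" unfolding map_key_upt M ..
  finally have "sort (P0 m p) = map ?key (read_perm xs)"
    by (intro properties_for_sort) (simp_all add: read_perm_def)
  then have E: "map ?key (read_perm xs) = P0 m p" using P0_sorted by (simp add: sorted_sort_id)
  fix t assume "t \<le> m"
  then show "xs ! (read_perm xs ! t - 1) = P0 m p ! t"
    using arg_cong[OF E, of "\<lambda>l. l ! t"] L1 by simp
qed


lemma mset_eq_distinct: "mset xs = mset ys \<Longrightarrow> distinct ys \<Longrightarrow> distinct xs"
  by (rule distinct_sub[of ys xs]) simp_all

lemma topples_iff:
  assumes p: "1 \<le> p" "p \<le> m" and xs: "xs \<in> config_S m p"
  shows "topples_to xs \<pi> \<longleftrightarrow> \<pi> = Nw p (read_perm xs)"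
proof -
  define w where "w = read_perm xs"
  have len: "length xs = m + 1" using config_iff[OF p] xs by auto
  have Mw: "mset w = mset [1..<m+2]" and Lw: "length w = m + 1"
    and Pw: "\<And>t. t \<le> m \<Longrightarrow> xs ! (w ! t - 1) = P0 m p ! t"
    using read_perm_props[OF p xs] unfolding w_def by auto
  have dw: "distinct w" using mset_eq_distinct[OF Mw] by simp
  have sw: "set w = set [1..<m+2]" using arg_cong[OF Mw, of set_mset] by simp
  define ls where "ls = take p w"
  define rs where "rs = drop p w"
  have w_eq: "ls @ rs = w" unfolding ls_def rs_def by simp
  have lls: "length ls = p" and lrs: "length rs = m + 1 - p" unfolding ls_def rs_def using Lw p by auto
  have g1: "distinct (ls @ rs)" unfolding w_eq by (rule dw)
  have g2: "\<forall>l\<in>set (ls@rs). 1 \<le> l \<and> l \<le> length xs" unfolding w_eq sw len by (simp del: upt_Suc)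
  have g3: "\<forall>a<length ls. xs ! (ls ! a - 1) = 1 + int a"
  proof (intro allI impI)
    fix a assume a: "a < length ls"
    have "ls ! a = w ! a" using a lls unfolding ls_def by simp
    then show "xs ! (ls ! a - 1) = 1 + int a" using Pw[of a] P0_nth[OF p, of a] a lls p by simp
  qed
  have g4: "\<forall>b<length rs. xs ! (rs ! b - 1) = 1 + int (length ls) - 1 + int b"
  proof (intro allI impI)
    fix b assume b: "b < length rs"
    have "rs ! b = w ! (p + b)" using b lrs Lw p unfolding rs_def by simp
    then show "xs ! (rs ! b - 1) = 1 + int (length ls) - 1 + int b"
      using Pw[of "p+b"] P0_nth[OF p, of "p+b"] b lrs lls p by simp
  qed
  obtain ys where ys: "topple_step\<^sup>*\<^sup>* xs ys" "length ys = length xs"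
    "\<forall>b<length rs. ys ! (fst (grid ls rs) ! b - 1) = 1 - 1 + int b"
    "\<forall>a<length ls. ys ! (snd (grid ls rs) ! a - 1) = 1 + int (length rs) + int a"
    using grid_steps[OF g1 g2 g3 g4] by blast
  define \<pi>0 where "\<pi>0 = Nw p w"
  have pi0: "\<pi>0 = fst (grid ls rs) @ snd (grid ls rs)" unfolding \<pi>0_def Nw_def gridw_def ls_def rs_def ..
  have Mpi: "mset \<pi>0 = mset [1..<m+2]" unfolding pi0 grid_mset2 w_eq Mw ..
  have Lpi: "length \<pi>0 = m + 1" using arg_cong[OF Mpi, of size] by simp
  let ?key = "\<lambda>l. ys ! (l - 1)"
  define pos where "pos t = (if t < m + 1 - p then int t else int t + 1)" for t
  have K: "map ?key \<pi>0 = map pos [0..<m+1]"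
  proof (rule nth_equalityI)
    show "length (map ?key \<pi>0) = length (map pos [0..<m+1])" using Lpi by simp
  next
    fix t assume "t < length (map ?key \<pi>0)"
    then have t: "t < m + 1" using Lpi by simp
    have e1: "map ?key \<pi>0 ! t = ?key (\<pi>0 ! t)" using t Lpi by simp
    have e2: "map pos [0..<m+1] ! t = pos t" using t by (simp del: upt_Suc)
    show "map ?key \<pi>0 ! t = map pos [0..<m+1] ! t"
      unfolding e1 e2
    proof (cases "t < m + 1 - p")
      case True
      then have "\<pi>0 ! t = fst (grid ls rs) ! t" unfolding pi0 using lrs by (simp add: nth_append)
      then show "?key (\<pi>0 ! t) = pos t" using ys(3) True lrs t by (simp add: pos_def)
    next
      case False
      then have "\<pi>0 ! t = snd (grid ls rs) ! (t - (m + 1 - p))" unfolding pi0 using lrs by (simp add: nth_append)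
      moreover have "t - (m + 1 - p) < length ls" using False t lls p by simp
      ultimately show "?key (\<pi>0 ! t) = pos t" using ys(4) False lrs t p by (simp add: pos_def)
    qed
  qed
  have sw2: "sorted_wrt (<) (map pos [0..<m+1])"
    unfolding sorted_wrt_iff_nth_less
  proof (intro allI impI)
    fix i j assume "i < j" "j < length (map pos [0..<m + 1])"
    then show "map pos [0..<m + 1] ! i < map pos [0..<m + 1] ! j" by (simp del: upt_Suc add: pos_def)
  qed
  then have sortK: "sorted (map ?key \<pi>0)" and distK: "distinct (map ?key \<pi>0)"
    unfolding K by (simp_all add: strict_sorted_iff)
  have inj: "inj_on ?key (set \<pi>0)" using distK by (simp add: distinct_map)
  have lys: "length ys = m + 1" using ys(2) len by simp
  have rp: "read_perm ys = \<pi>0"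
    unfolding read_perm_def lys
  proof (rule sort_key_inj_key_eq)
    show "mset [1..<m + 1 + 1] = mset \<pi>0" using Mpi by simp
    show "inj_on ?key (set [1..<m + 1 + 1])" using inj arg_cong[OF Mpi, of set_mset] by simp
    show "sorted (map ?key \<pi>0)" by (rule sortK)
  qed
  have dys: "distinct ys"
  proof -
    have e: "ys = map ?key [1..<m+2]" using map_key_upt[of ys] lys by simp
    have "mset ys = mset (map ?key \<pi>0)" unfolding mset_map using e Mpi by (metis mset_map)
    then show ?thesis using mset_eq_distinct distK by blast
  qed
  have T0: "topples_to xs \<pi>0" unfolding topples_to_def stable_config_def using ys(1) dys rp by blast
  show ?thesis
  proof
    assume "topples_to xs \<pi>"
    then obtain zs where zs: "topple_step\<^sup>*\<^sup>* xs zs" "distinct zs" "read_perm zs = \<pi>"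
      unfolding topples_to_def stable_config_def by blast
    have "zs = ys" using unique_nf[OF config_Inv[OF p xs] zs(1) ys(1) zs(2) dys] .
    then show "\<pi> = Nw p (read_perm xs)" using zs(3) rp \<pi>0_def w_def by simp
  next
    assume "\<pi> = Nw p (read_perm xs)"
    then show "topples_to xs \<pi>" using T0 \<pi>0_def w_def by simp
  qed
qed



declare upt_Suc[simp del]

lemma grid_swap: "grid (ls@[a]) (b#rs) = grid (ls@[b]) (a#rs)"
  by (induction ls) (simp_all add: min.commute max.commute)

definition swp :: "nat \<Rightarrow> nat list \<Rightarrow> nat list" where
  "swp p w = w[p - 1 := w ! p, p := w ! (p - 1)]"

lemma Nw_swap:
  assumes "1 \<le> p" "p < length w"
  shows "Nw p (swp p w) = Nw p w"
proof -
  let ?w' = "swp p w"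
  have l': "length ?w' = length w" unfolding swp_def by simp
  have pp: "p = Suc (p - 1)" using assms by simp
  have t1: "take p w = take (p - 1) w @ [w ! (p - 1)]"
    using take_Suc_conv_app_nth[of "p - 1" w] assms pp by simp
  have d1: "drop p w = w ! p # drop (Suc p) w" using Cons_nth_drop_Suc[of p w] assms by simp
  have t2: "take p ?w' = take (p - 1) w @ [w ! p]"
  proof -
    have "take p ?w' = take (p - 1) ?w' @ [?w' ! (p - 1)]"
      using take_Suc_conv_app_nth[of "p - 1" ?w'] assms pp l' by simp
    moreover have "take (p - 1) ?w' = take (p - 1) w" unfolding swp_def by simp
    moreover have "?w' ! (p - 1) = w ! p" unfolding swp_def using assms by (simp add: nth_list_update)
    ultimately show ?thesis by simp
  qed
  have d2: "drop p ?w' = w ! (p - 1) # drop (Suc p) w"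
  proof -
    have "drop p ?w' = ?w' ! p # drop (Suc p) ?w'" using Cons_nth_drop_Suc[of p ?w'] assms l' by simp
    moreover have "drop (Suc p) ?w' = drop (Suc p) w" unfolding swp_def by simp
    moreover have "?w' ! p = w ! (p - 1)" unfolding swp_def using assms by (simp add: nth_list_update)
    ultimately show ?thesis by simp
  qed
  show ?thesis unfolding Nw_def gridw_def t1 d1 t2 d2 grid_swap ..
qed

lemma sorted_wrt_filter_rev:
  "sorted_wrt R (filter P xs) \<Longrightarrow> sorted_wrt (\<lambda>x y. P x \<longrightarrow> P y \<longrightarrow> R x y) xs"
  by (induction xs) (auto split: if_splits)

lemma sort_key_eq_perm:
  fixes f :: "nat \<Rightarrow> int"
  assumes M: "mset w = mset L" and sL: "sorted_wrt (<) L" and sw: "sorted (map f w)"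
    and H: "\<And>i j. i < j \<Longrightarrow> j < length w \<Longrightarrow> f (w ! i) = f (w ! j) \<Longrightarrow> w ! i < w ! j"
  shows "sort_key f L = w"
proof (rule properties_for_sort_key)
  show "mset w = mset L" by (rule M)
  show "sorted (map f w)" by (rule sw)
  fix k assume "k \<in> set w"
  let ?P = "\<lambda>x. f k = f x"
  have s1: "sorted_wrt (<) (filter ?P L)" using sL by (rule sorted_wrt_filter)
  have "sorted_wrt (\<lambda>x y. f x = f y \<longrightarrow> x < y) w"
    unfolding sorted_wrt_iff_nth_less using H by blast
  then have "sorted_wrt (\<lambda>x y. f x = f y \<longrightarrow> x < y) (filter ?P w)" by (rule sorted_wrt_filter)
  then have s2: "sorted_wrt (<) (filter ?P w)" by (rule sorted_wrt_mono_rel[rotated]) auto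
  have "set w = set L" using arg_cong[OF M, of set_mset] by simp
  then have "set (filter ?P w) = set (filter ?P L)" by simp
  then show "filter ?P w = filter ?P L" using strict_sorted_equal[OF s1 s2] by simp
qed

lemma read_perm_order:
  assumes p: "1 \<le> p" "p \<le> m" and xs: "xs \<in> config_S m p"
  shows "read_perm xs ! (p - 1) < read_perm xs ! p"
proof -
  define w where "w = read_perm xs"
  let ?key = "\<lambda>l. xs ! (l - 1)"
  have len: "length xs = m + 1" using config_iff[OF p] xs by auto
  have Lw: "length w = m + 1" and Pw: "\<And>t. t \<le> m \<Longrightarrow> ?key (w ! t) = P0 m p ! t"
    using read_perm_props[OF p xs] unfolding w_def by auto
  have "filter (\<lambda>y. ?key y = int p) w = filter (\<lambda>y. ?key y = int p) [1..<length xs + 1]"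
    unfolding w_def read_perm_def by (rule sort_key_stable)
  moreover have "sorted_wrt (<) (filter (\<lambda>y. ?key y = int p) [1..<length xs + 1])"
    by (rule sorted_wrt_filter) (simp del: upt_Suc)
  ultimately have "sorted_wrt (<) (filter (\<lambda>y. ?key y = int p) w)" by simp
  then have S: "sorted_wrt (\<lambda>x y. ?key x = int p \<longrightarrow> ?key y = int p \<longrightarrow> x < y) w"
    by (rule sorted_wrt_filter_rev)
  have k1: "?key (w ! (p - 1)) = int p" using Pw[of "p - 1"] P0_nth[OF p, of "p - 1"] p by simp
  have k2: "?key (w ! p) = int p" using Pw[of p] P0_nth[OF p, of p] p by simp
  have S2: "\<forall>i j. i < j \<longrightarrow> j < length w \<longrightarrow> (?key (w ! i) = int p \<longrightarrow> ?key (w ! j) = int p \<longrightarrow> w ! i < w ! j)"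
    using S unfolding sorted_wrt_iff_nth_less .
  have "p - 1 < p" "p < length w" using p Lw by auto
  then have "w ! (p - 1) < w ! p" using S2 k1 k2 by blast
  then show ?thesis unfolding w_def .
qed


definition posn :: "nat list \<Rightarrow> nat \<Rightarrow> nat" where
  "posn w l = (LEAST t. t < length w \<and> w ! t = l)"

lemma posn_nth: "distinct w \<Longrightarrow> t < length w \<Longrightarrow> posn w (w ! t) = t"
  unfolding posn_def
proof (rule Least_equality)
  assume "distinct w" "t < length w"
  then show "\<And>y. y < length w \<and> w ! y = w ! t \<Longrightarrow> t \<le> y"
    by (metis nth_eq_iff_index_eq order_refl)
qed simp

definition psi :: "nat \<Rightarrow> nat \<Rightarrow> nat list \<Rightarrow> int list" where
  "psi m p w = map (\<lambda>a. P0 m p ! posn w (Suc a)) [0..<m+1]"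

lemma P0_eq_idx:
  assumes p: "1 \<le> p" "p \<le> m" and ij: "i < j" "j \<le> m" and e: "P0 m p ! i = P0 m p ! j"
  shows "i = p - 1 \<and> j = p"
  using e P0_nth[OF p, of i] P0_nth[OF p, of j] ij by (auto split: if_splits)

lemma psi_props:
  assumes p: "1 \<le> p" "p \<le> m" and Mw: "mset w = mset [1..<m+2]" and ord: "w ! (p - 1) < w ! p"
  shows "psi m p w \<in> config_S m p" "read_perm (psi m p w) = w"
proof -
  have dw: "distinct w" using mset_eq_distinct[OF Mw] by simp
  have sw: "set w = {1..<m+2}" using arg_cong[OF Mw, of set_mset] by simp
  have Lw: "length w = m + 1" using arg_cong[OF Mw, of size] by simp
  define xs where "xs = psi m p w"
  have lx: "length xs = m + 1" unfolding xs_def psi_def by simp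
  let ?key = "\<lambda>l. xs ! (l - 1)"
  have kl: "?key l = P0 m p ! posn w l" if "l \<in> set w" for l
  proof -
    have "1 \<le> l" "l \<le> m + 1" using that sw by auto
    then have l1: "l - 1 < m + 1" "Suc (l - 1) = l" by auto
    then have "[0..<m+1] ! (l - 1) = l - 1" using nth_upt[of 0 "l - 1" "m + 1"] by simp
    then show ?thesis unfolding xs_def psi_def using l1 by simp
  qed
  have mk: "map ?key w = P0 m p"
  proof (rule nth_equalityI)
    show "length (map ?key w) = length (P0 m p)" using Lw P0_length[OF p] by simp
  next
    fix t assume "t < length (map ?key w)"
    then have t: "t < length w" by simp
    then show "map ?key w ! t = P0 m p ! t" using kl[of "w ! t"] posn_nth[OF dw t] by simp
  qed
  have "mset xs = mset (map ?key [1..<m+2])" using map_key_upt[of xs] lx by simp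
  also have "\<dots> = image_mset ?key (mset w)" using Mw by simp
  also have "\<dots> = mset (P0 m p)" using mk by (metis mset_map)
  finally have "mset xs = mset (P0 m p)" .
  then show "psi m p w \<in> config_S m p" using config_iff[OF p] lx xs_def by simp
  have "sort_key ?key [1..<m+2] = w"
  proof (rule sort_key_eq_perm)
    show "mset w = mset [1..<m+2]" by (rule Mw)
    show "sorted_wrt (<) [1..<m+2]" by (rule sorted_wrt_upt)
    show "sorted (map ?key w)" using mk P0_sorted by simp
    fix i j assume ij: "i < j" "j < length w" and e: "?key (w ! i) = ?key (w ! j)"
    have "P0 m p ! i = P0 m p ! j" using e mk ij
      by (metis length_map less_trans nth_map)
    then have "i = p - 1 \<and> j = p" using P0_eq_idx[OF p, of i j] ij Lw by simp
    then show "w ! i < w ! j" using ord by simp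
  qed
  then show "read_perm (psi m p w) = w" unfolding read_perm_def xs_def[symmetric] lx by simp
qed

lemma count_config:
  assumes p: "1 \<le> p" "p \<le> m"
  shows "card {xs \<in> config_S m p. topples_to xs \<pi>} =
    card {w. mset w = mset [1..<m+2] \<and> w ! (p - 1) < w ! p \<and> Nw p w = \<pi>}"
proof (rule bij_betw_same_card[of read_perm])
  let ?A = "{xs \<in> config_S m p. topples_to xs \<pi>}"
  let ?B = "{w. mset w = mset [1..<m+2] \<and> w ! (p - 1) < w ! p \<and> Nw p w = \<pi>}"
  show "bij_betw read_perm ?A ?B"
    unfolding bij_betw_def
  proof (intro conjI)
    show "inj_on read_perm ?A"
    proof (rule inj_onI)
      fix xs ys assume xs: "xs \<in> ?A" and ys: "ys \<in> ?A" and e: "read_perm xs = read_perm ys"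
      have cx: "xs \<in> config_S m p" and cy: "ys \<in> config_S m p" using xs ys by auto
      have lx: "length xs = m + 1" and ly: "length ys = m + 1" using config_iff[OF p] cx cy by auto
      let ?w = "read_perm xs"
      have Mw: "mset ?w = mset [1..<m+2]" and Lw: "length ?w = m + 1"
        using read_perm_props[OF p cx] by auto
      have sw: "set ?w = {1..<m+2}" using arg_cong[OF Mw, of set_mset] by simp
      show "xs = ys"
      proof (rule nth_equalityI)
        show "length xs = length ys" using lx ly by simp
        fix a assume a: "a < length xs"
        then have "Suc a \<in> set ?w" using sw lx by simp
        then obtain t where t: "t < length ?w" "?w ! t = Suc a" by (metis in_set_conv_nth)
        have "xs ! (?w ! t - 1) = P0 m p ! t" using read_perm_props(3)[OF p cx, of t] t Lw by simp
        moreover have "ys ! (?w ! t - 1) = P0 m p ! t" using read_perm_props(3)[OF p cy, of t] t Lw e by simp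
        ultimately show "xs ! a = ys ! a" using t by simp
      qed
    qed
    show "read_perm ` ?A = ?B"
    proof (intro equalityI subsetI)
      fix w assume "w \<in> read_perm ` ?A"
      then obtain xs where xs: "xs \<in> config_S m p" "topples_to xs \<pi>" and w: "w = read_perm xs" by auto
      show "w \<in> ?B"
        using read_perm_props(1)[OF p xs(1)] read_perm_order[OF p xs(1)] topples_iff[OF p xs(1)] xs(2) w by simp
    next
      fix w assume w: "w \<in> ?B"
      then have Mw: "mset w = mset [1..<m+2]" and o: "w ! (p - 1) < w ! p" and N: "Nw p w = \<pi>" by auto
      have c: "psi m p w \<in> config_S m p" and r: "read_perm (psi m p w) = w" using psi_props[OF p Mw o] by auto
      have "topples_to (psi m p w) \<pi>" using topples_iff[OF p c] r N by simp
      then show "w \<in> read_perm ` ?A" using c r by (metis (mono_tags, lifting) image_eqI mem_Collect_eq)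
    qed
  qed
qed

lemma perm_finite: "finite {w. mset w = mset (L :: nat list) \<and> P w}"
proof -
  have "{w. mset w = mset L \<and> P w} \<subseteq> {w. set w \<subseteq> set L \<and> length w = length L}"
  proof
    fix w assume "w \<in> {w. mset w = mset L \<and> P w}"
    then have M: "mset w = mset L" by simp
    show "w \<in> {w. set w \<subseteq> set L \<and> length w = length L}"
      using arg_cong[OF M, of set_mset] arg_cong[OF M, of size] by simp
  qed
  moreover have "finite {w. set w \<subseteq> set L \<and> length w = length L}"
    by (rule finite_lists_length_eq) simp
  ultimately show ?thesis by (rule finite_subset)
qed

lemma count_words:
  assumes p: "1 \<le> p" "p \<le> m"
  shows "card {w. mset w = mset [1..<m+2] \<and> Nw p w = \<pi>} =
    2 * card {w. mset w = mset [1..<m+2] \<and> w ! (p - 1) < w ! p \<and> Nw p w = \<pi>}"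
proof -
  let ?U = "{w. mset w = mset [1..<m+2] \<and> Nw p w = \<pi>}"
  let ?B = "{w. mset w = mset [1..<m+2] \<and> w ! (p - 1) < w ! p \<and> Nw p w = \<pi>}"
  let ?B' = "{w. mset w = mset [1..<m+2] \<and> w ! p < w ! (p - 1) \<and> Nw p w = \<pi>}"
  have len: "length w = m + 1" if "mset w = mset [1..<m+2]" for w
    using arg_cong[OF that, of size] by simp
  have U: "?U = ?B \<union> ?B'"
  proof (intro equalityI subsetI)
    fix w assume w: "w \<in> ?U"
    then have Mw: "mset w = mset [1..<m+2]" by simp
    have "distinct w" using mset_eq_distinct[OF Mw] by simp
    moreover have "p - 1 < length w" "p < length w" "p - 1 \<noteq> p" using len[OF Mw] p by auto
    ultimately have "w ! (p - 1) \<noteq> w ! p" by (simp add: nth_eq_iff_index_eq)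
    then show "w \<in> ?B \<union> ?B'" using w by auto
  qed auto
  have fin: "finite ?B" "finite ?B'" by (rule perm_finite)+
  have disj: "?B \<inter> ?B' = {}" by auto
  have swp_props: "mset (swp p w) = mset w" "swp p w ! (p - 1) = w ! p" "swp p w ! p = w ! (p - 1)"
    "swp p (swp p w) = w" "Nw p (swp p w) = Nw p w"
    if "mset w = mset [1..<m+2]" for w
  proof -
    have l: "p - 1 < length w" "p < length w" "p - 1 \<noteq> p" using len[OF that] p by auto
    show "mset (swp p w) = mset w" unfolding swp_def using mset_swap[OF l(2,1)] .
    show "swp p w ! (p - 1) = w ! p" unfolding swp_def using l by (simp add: nth_list_update)
    show "swp p w ! p = w ! (p - 1)" unfolding swp_def using l by (simp add: nth_list_update)
    show "swp p (swp p w) = w" unfolding swp_def using l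
      by (intro nth_equalityI) (auto simp: nth_list_update)
    show "Nw p (swp p w) = Nw p w" using Nw_swap[of p w] l p by simp
  qed
  have "card ?B' = card ?B"
  proof (rule bij_betw_same_card[of "swp p"])
    show "bij_betw (swp p) ?B' ?B"
    proof (rule bij_betw_byWitness[of _ "swp p"])
      show "swp p ` ?B' \<subseteq> ?B" using swp_props by auto
      show "swp p ` ?B \<subseteq> ?B'" using swp_props by auto
      show "\<forall>x\<in>?B'. swp p (swp p x) = x" using swp_props by auto
      show "\<forall>x\<in>?B. swp p (swp p x) = x" using swp_props by auto
    qed
  qed
  then show ?thesis unfolding U using card_Un_disjoint[OF fin disj] by simp
qed


theorem theorem2p12:
  fixes n p i j :: nat and \<pi> :: "nat list"
  assumes "n \<ge> 2" and "1 \<le> p" and "p \<le> n - 1"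
    and "is_perm n \<pi>" and "p_resultant n p \<pi>"
    and "ltr_maxima (take (n - p) \<pi>) = i"
    and "rtl_minima (drop (n - p) \<pi>) = j"
  shows "real (card {xs \<in> config_S (n - 1) p. topples_to xs \<pi>}) = real (poly_bernoulli_B i j) / 2"
proof -
  define m where "m = n - 1"
  have nm: "n = m + 1" using assms(1) unfolding m_def by simp
  have p: "1 \<le> p" "p \<le> m" using assms(2,3) unfolding m_def by auto
  have Mpi: "mset \<pi> = mset [1..<m+2]" using assms(4) unfolding is_perm_def nm by simp
  have dpi: "distinct \<pi>" using mset_eq_distinct[OF Mpi] by (simp add: distinct_upt)
  have Lpi: "length \<pi> = m + 1" using arg_cong[OF Mpi, of size] by simp
  define L where "L = take (n - p) \<pi>"
  define R where "R = drop (n - p) \<pi>"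
  have LR: "L @ R = \<pi>" unfolding L_def R_def by simp
  have lL: "length L = m + 1 - p" and lR: "length R = p" unfolding L_def R_def using Lpi nm p by auto
  have split: "gridw p w = (L, R)" if "Nw p w = \<pi>" "length w = m + 1" for w
  proof -
    have "length (fst (gridw p w)) = m + 1 - p" using that(2) unfolding gridw_def by simp
    moreover have "fst (gridw p w) @ snd (gridw p w) = L @ R" using that(1) LR unfolding Nw_def by simp
    ultimately show ?thesis using lL by (simp add: append_eq_append_conv prod_eq_iff)
  qed
  obtain xs0 where xs0: "xs0 \<in> config_S m p" "topples_to xs0 \<pi>"
    using assms(5) unfolding p_resultant_def m_def by blast
  have N0: "Nw p (read_perm xs0) = \<pi>" using topples_iff[OF p xs0(1)] xs0(2) by simp
  have G0: "gridw p (read_perm xs0) = (L, R)"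
    using split[OF N0] read_perm_props(2)[OF p xs0(1)] by simp
  have lt: "\<forall>a\<in>set L. \<forall>b\<in>set R. a < b"
  proof (intro ballI)
    fix a b assume a: "a \<in> set L" and b: "b \<in> set R"
    have "a \<le> b" using gridw_le[of a p "read_perm xs0" b] G0 a b by simp
    moreover have "a \<noteq> b" using dpi a b LR by (metis disjoint_iff distinct_append)
    ultimately show "a < b" by simp
  qed
  have dLR: "distinct (L @ R)" using dpi LR by simp
  have U: "{w. mset w = mset [1..<m+2] \<and> Nw p w = \<pi>} = {w. gridw p w = (L, R)}"
  proof (intro equalityI subsetI)
    fix w assume "w \<in> {w. mset w = mset [1..<m+2] \<and> Nw p w = \<pi>}"
    then have Mw: "mset w = mset [1..<m+2]" and Nw: "Nw p w = \<pi>" by auto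
    have "length w = m + 1" using arg_cong[OF Mw, of size] by simp
    then show "w \<in> {w. gridw p w = (L, R)}" using split[OF Nw] by simp
  next
    fix w assume "w \<in> {w. gridw p w = (L, R)}"
    then have G: "gridw p w = (L, R)" by simp
    have "mset w = mset (L @ R)" using gridw_mset[of w p] G by simp
    then have "mset w = mset [1..<m+2]" using LR Mpi by simp
    moreover have "Nw p w = \<pi>" using G LR unfolding Nw_def by simp
    ultimately show "w \<in> {w. mset w = mset [1..<m+2] \<and> Nw p w = \<pi>}" by simp
  qed
  have cU: "card {w. gridw p w = (L, R)} = cc i j"
    using count_main[OF lR dLR lt] assms(6,7) unfolding L_def R_def by simp
  have "card {xs \<in> config_S m p. topples_to xs \<pi>} =
      card {w. mset w = mset [1..<m+2] \<and> w ! (p - 1) < w ! p \<and> Nw p w = \<pi>}"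
    by (rule count_config[OF p])
  moreover have "2 * card {w. mset w = mset [1..<m+2] \<and> w ! (p - 1) < w ! p \<and> Nw p w = \<pi>} = cc i j"
    using count_words[OF p, of \<pi>] U cU by simp
  ultimately have "2 * card {xs \<in> config_S m p. topples_to xs \<pi>} = poly_bernoulli_B i j"
    using cc_eq_B by simp
  then have "real (2 * card {xs \<in> config_S m p. topples_to xs \<pi>}) = real (poly_bernoulli_B i j)"
    by simp
  then show ?thesis unfolding m_def by simp
qed


end
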